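(* Let $(\Omega,\mathscr{F},\mathbb{P})$ be a probability space, $\mathscr{G}\subseteq\mathscr{F}$ a sub-$\sigma$-algebra, $N\geq1$ dyadic, $D>0$, $T>0$. If $\omega\in\Omega\mapsto v^\omega\in X_{N,D}([0,T])$ is strongly $\mathscr{G}$-measurable, then the map $$(\omega,\tau)\in\Omega\times[0,T]\mapsto\|v^\omega\|_{X_{N,D}([0,\tau])}\in\mathbb{R}_{\geq0}$$ is measurable with respect to the product $\sigma$-algebra $\mathscr{G}\otimes\mathscr{B}([0,T])$, where $\mathscr{B}([0,T])$ is the Borel $\sigma$-algebra. The analogous statement holds with $X_{N,D}$ replaced by $X_{\leq N,D}$, $S_{N,D}$, or $S_{\leq N,D}$.
   Context: Let $\phi:\mathbb{R}^3\to\mathbb{R}$ be smooth with $\phi\equiv1$ on $B(0,1)$, $\phi\equiv0$ outside $B(0,2)$; $\psi_1=\phi$, $\psi_M(\xi)=\phi(\xi/M)-\phi(2\xi/M)$ for dyadic $M\geq2$; $P_M$ is the multiplier with symbol $\psi_M$. $c_{N,D}(M)=\max(N/M,M/N)^D$, $c_{\leq N,D}(M)=\max(1,M/N)^D$. $X_{N,D}([0,T])$ is the space of $u\in C^0_tL^2_x([0,T]\times\mathbb{R}^3)$ with $\|u\|_{X_{N,D}([0,T])}=\sum_{M}c_{N,D}(M)\|P_Mu\|_{L^\infty_tL^2_x([0,T]\times\mathbb{R}^3)}<\infty$; $X_{\leq N,D}$ is defined the same way with $c_{\leq N,D}$; $S_{N,D}([0,T])$, $S_{\leq N,D}([0,T])$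 are the spaces of $u\in L^2_tL^\infty_x([0,T]\times\mathbb{R}^3)$ with finite norm $\sum_Mc(M)\|P_Mu\|_{L^2_tL^\infty_x([0,T]\times\mathbb{R}^3)}$ for $c=c_{N,D}$, resp. $c_{\leq N,D}$. A map $v:\Omega\to E$ into a Banach space is simple if $v=\sum_{i=1}^k1_{F_i}x_i$ with $F_i$ measurable and $x_i\in E$; it is strongly $\mathscr{G}$-measurable if it is a pointwise limit of simple functions with $F_i\in\mathscr{G}$. *)

theory Defs
  imports "HOL-Analysis.Analysis" "HOL-Probability.Probability"
begin

type_synonym fn = "real \<Rightarrow> real^3 \<Rightarrow> complex"

text \<open>C-infinity: Frechet differentiable to every order; F ds is the iterated
derivative applied to the directions ds.\<close>
definition smooth3 :: "(real^3 \<Rightarrow> real) \<Rightarrow> bool" where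
  "smooth3 f \<longleftrightarrow> (\<exists>F :: (real^3) list \<Rightarrow> real^3 \<Rightarrow> real. F [] = f \<and>
      (\<forall>ds x. (F ds has_derivative (\<lambda>h. F (h # ds) x)) (at x)))"

definition psi :: "(real^3 \<Rightarrow> real) \<Rightarrow> real \<Rightarrow> real^3 \<Rightarrow> real" where
  "psi \<phi> M \<xi> = (if M = 1 then \<phi> \<xi> else \<phi> ((1 / M) *\<^sub>R \<xi>) - \<phi> ((2 / M) *\<^sub>R \<xi>))"

text \<open>P_M as the Fourier multiplier with symbol psi_M, realised as convolution with
the inverse Fourier transform of psi_M (Fourier transform: integral of f(x) e^{-i x.xi}).\<close>
definition LP_kernel :: "(real^3 \<Rightarrow> real) \<Rightarrow> real \<Rightarrow> real^3 \<Rightarrow> complex" where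
  "LP_kernel \<phi> M z = complex_of_real (1 / (2 * pi) ^ 3) *
      (LINT \<xi>|lborel. complex_of_real (psi \<phi> M \<xi>) * cis (z \<bullet> \<xi>))"

definition LP :: "(real^3 \<Rightarrow> real) \<Rightarrow> real \<Rightarrow> (real^3 \<Rightarrow> complex) \<Rightarrow> real^3 \<Rightarrow> complex" where
  "LP \<phi> M f x = (LINT y|lborel. LP_kernel \<phi> M (x - y) * f y)"

definition cND :: "real \<Rightarrow> real \<Rightarrow> real \<Rightarrow> real" where
  "cND N D M = (max (N / M) (M / N)) powr D"

definition cleND :: "real \<Rightarrow> real \<Rightarrow> real \<Rightarrow> real" where
  "cleND N D M = (max 1 (M / N)) powr D"

definition sq_int :: "(real^3 \<Rightarrow> complex) \<Rightarrow> bool" where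
  "sq_int f \<longleftrightarrow> f \<in> borel_measurable lborel \<and> integrable lborel (\<lambda>x. (cmod (f x))\<^sup>2)"

definition L2x :: "(real^3 \<Rightarrow> complex) \<Rightarrow> real" where
  "L2x f = sqrt (LINT x|lborel. (cmod (f x))\<^sup>2)"

definition CL2 :: "real \<Rightarrow> fn \<Rightarrow> bool" where
  "CL2 T u \<longleftrightarrow> (\<forall>t\<in>{0..T}. sq_int (u t)) \<and>
     (\<forall>t\<in>{0..T}. ((\<lambda>s. L2x (\<lambda>x. u s x - u t x)) \<longlongrightarrow> 0) (at t within {0..T}))"

text \<open>L^infty_t L^2_x([0,tau]) norm (sup over time; functions are continuous in time)\<close>
definition LinfL2 :: "real \<Rightarrow> fn \<Rightarrow> ennreal" where
  "LinfL2 \<tau> u = (SUP t\<in>{0..\<tau>}. ennreal (L2x (u t)))"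

definition Linfx :: "(real^3 \<Rightarrow> complex) \<Rightarrow> ennreal" where
  "Linfx f = e2ennreal (esssup lborel (\<lambda>x. ereal (cmod (f x))))"

definition L2Linf :: "real \<Rightarrow> fn \<Rightarrow> ennreal" where
  "L2Linf \<tau> u = (let I = (\<integral>\<^sup>+ t. indicator {0..\<tau>} t * (Linfx (u t))\<^sup>2 \<partial>lborel)
     in if I = \<infinity> then \<infinity> else ennreal (sqrt (enn2real I)))"

definition L2tLinfx_space :: "real \<Rightarrow> fn \<Rightarrow> bool" where
  "L2tLinfx_space T u \<longleftrightarrow>
     (\<lambda>(t, x). u t x) \<in> borel_measurable (restrict_space lborel {0..T} \<Otimes>\<^sub>M lborel) \<and>
     L2Linf T u < \<infinity>"

definition Xnorm :: "(real^3 \<Rightarrow> real) \<Rightarrow> (real \<Rightarrow> real) \<Rightarrow> real \<Rightarrow> fn \<Rightarrow> ennreal" where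
  "Xnorm \<phi> c \<tau> u = (\<Sum>k. ennreal (c (2 ^ k)) * LinfL2 \<tau> (\<lambda>t. LP \<phi> (2 ^ k) (u t)))"

definition Snorm :: "(real^3 \<Rightarrow> real) \<Rightarrow> (real \<Rightarrow> real) \<Rightarrow> real \<Rightarrow> fn \<Rightarrow> ennreal" where
  "Snorm \<phi> c \<tau> u = (\<Sum>k. ennreal (c (2 ^ k)) * L2Linf \<tau> (\<lambda>t. LP \<phi> (2 ^ k) (u t)))"

definition Xspace :: "(real^3 \<Rightarrow> real) \<Rightarrow> (real \<Rightarrow> real) \<Rightarrow> real \<Rightarrow> fn \<Rightarrow> bool" where
  "Xspace \<phi> c T u \<longleftrightarrow> CL2 T u \<and> Xnorm \<phi> c T u < \<infinity>"

definition Sspace :: "(real^3 \<Rightarrow> real) \<Rightarrow> (real \<Rightarrow> real) \<Rightarrow> real \<Rightarrow> fn \<Rightarrow> bool" where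
  "Sspace \<phi> c T u \<longleftrightarrow> L2tLinfx_space T u \<and> Snorm \<phi> c T u < \<infinity>"

definition strongly_meas :: "'w measure \<Rightarrow> (fn \<Rightarrow> bool) \<Rightarrow> (fn \<Rightarrow> ennreal) \<Rightarrow> ('w \<Rightarrow> fn) \<Rightarrow> bool" where
  "strongly_meas G inE nrm v \<longleftrightarrow> (\<exists>s :: nat \<Rightarrow> ('w set \<times> fn) list.
     (\<forall>n. \<forall>(F, x)\<in>set (s n). F \<in> sets G \<and> inE x) \<and>
     (\<forall>\<omega>\<in>space G. ((\<lambda>n. nrm (\<lambda>t y. (\<Sum>(F, x)\<leftarrow>s n. indicator F \<omega> * x t y) - v \<omega> t y))
         \<longlongrightarrow> 0) sequentially))"

end

theory Submission
  imports Defs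
begin

lemma mono_ennreal_borel:
  fixes g :: "real \<Rightarrow> ennreal"
  assumes "mono g"
  shows "g \<in> borel_measurable borel"
proof (rule borel_measurableI_less)
  fix y
  have "is_interval {x. g x < y}"
    unfolding is_interval_1 using assms
    by (auto simp: mono_def intro: le_less_trans)
  then show "{x \<in> space borel. g x < y} \<in> sets borel"
    using real_interval_borel_measurable by simp
qed

definition Ssum :: "('w set \<times> fn) list \<Rightarrow> 'w \<Rightarrow> fn" where
  "Ssum L \<omega> = (\<lambda>t y. (\<Sum>(F, x)\<leftarrow>L. indicator F \<omega> * x t y))"

fun Ev :: "('w set \<times> fn) list \<Rightarrow> bool list \<Rightarrow> fn" where
  "Ev [] bs = (\<lambda>t y. 0)"
| "Ev (p # L) [] = (\<lambda>t y. 0)"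
| "Ev ((F, x) # L) (b # bs) = (\<lambda>t y. (if b then 1 else 0) * x t y + Ev L bs t y)"

lemma Ssum_Ev: "Ssum L \<omega> = Ev L (map (\<lambda>p. \<omega> \<in> fst p) L)"
  by (induction L) (auto simp: Ssum_def indicator_def fun_eq_iff)

lemma meas_list:
  fixes L :: "('w set \<times> 'b) list" and \<Phi> :: "bool list \<Rightarrow> real \<Rightarrow> real"
  assumes "\<forall>p\<in>set L. fst p \<in> sets G" and "\<And>bs. \<Phi> bs \<in> borel_measurable R"
  shows "(\<lambda>z. \<Phi> (map (\<lambda>p. fst z \<in> fst p) L) (snd z)) \<in> borel_measurable (G \<Otimes>\<^sub>M R)"
  using assms
proof (induction L arbitrary: \<Phi>)
  case Nil
  then show ?case by (simp add: measurable_compose[OF measurable_snd])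
next
  case (Cons p L)
  have e: "(\<lambda>z. \<Phi> (map (\<lambda>p. fst z \<in> fst p) (p # L)) (snd z)) =
    (\<lambda>z. if fst z \<in> fst p then \<Phi> (True # map (\<lambda>p. fst z \<in> fst p) L) (snd z)
         else \<Phi> (False # map (\<lambda>p. fst z \<in> fst p) L) (snd z))"
    by auto
  have m1: "(\<lambda>z. \<Phi> (True # map (\<lambda>p. fst z \<in> fst p) L) (snd z)) \<in> borel_measurable (G \<Otimes>\<^sub>M R)"
    using Cons.IH[of "\<lambda>bs. \<Phi> (True # bs)"] Cons.prems by auto
  have m2: "(\<lambda>z. \<Phi> (False # map (\<lambda>p. fst z \<in> fst p) L) (snd z)) \<in> borel_measurable (G \<Otimes>\<^sub>M R)"
    using Cons.IH[of "\<lambda>bs. \<Phi> (False # bs)"] Cons.prems by auto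
  have F: "fst p \<in> sets G" using Cons.prems by auto
  have "{z \<in> space (G \<Otimes>\<^sub>M R). fst z \<in> fst p} = fst p \<times> space R"
    using sets.sets_into_space[OF F] by (auto simp: space_pair_measure)
  then have pr: "{z \<in> space (G \<Otimes>\<^sub>M R). fst z \<in> fst p} \<in> sets (G \<Otimes>\<^sub>M R)"
    using F by simp
  show ?case unfolding e by (rule measurable_If[OF m1 m2 pr])
qed

lemma abstract_main:
  fixes Nrm :: "real \<Rightarrow> fn \<Rightarrow> ennreal" and P inE :: "fn \<Rightarrow> bool" and v :: "'w \<Rightarrow> fn"
    and G :: "'w measure" and T :: real
  assumes mono: "\<And>u. mono (\<lambda>\<tau>. Nrm \<tau> u)"
    and tri: "\<And>a b \<tau>. P a \<Longrightarrow> P b \<Longrightarrow> \<tau> \<le> T \<Longrightarrow> Nrm \<tau> a \<le> Nrm \<tau> b + Nrm T (\<lambda>t y. a t y - b t y)"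
    and neg: "\<And>u \<tau>. Nrm \<tau> (\<lambda>t y. - u t y) = Nrm \<tau> u"
    and P0: "P (\<lambda>t y. 0)" and Padd: "\<And>a b c. P a \<Longrightarrow> P b \<Longrightarrow> P (\<lambda>t y. c * a t y + b t y)"
    and inEP: "\<And>u. inE u \<Longrightarrow> P u"
    and vin: "\<forall>\<omega>\<in>space G. inE (v \<omega>)" and fin: "\<forall>\<omega>\<in>space G. Nrm T (v \<omega>) < \<infinity>"
    and sm: "strongly_meas G inE (Nrm T) v"
  shows "(\<lambda>(\<omega>, \<tau>). enn2real (Nrm \<tau> (v \<omega>))) \<in> borel_measurable (G \<Otimes>\<^sub>M restrict_space borel {0..T})"
proof -
  obtain s :: "nat \<Rightarrow> ('w set \<times> fn) list" where
    s1: "\<forall>n. \<forall>(F, x)\<in>set (s n). F \<in> sets G \<and> inE x" and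
    s2: "\<forall>\<omega>\<in>space G. ((\<lambda>n. Nrm T (\<lambda>t y. Ssum (s n) \<omega> t y - v \<omega> t y)) \<longlongrightarrow> 0) sequentially"
    using sm unfolding strongly_meas_def Ssum_def by blast
  have PS: "P (Ssum L \<omega>)" if "\<forall>(F, x)\<in>set L. inE x" for L \<omega>
    using that
  proof (induction L)
    case Nil
    then show ?case using P0 by (simp add: Ssum_def)
  next
    case (Cons p L)
    obtain F x where p: "p = (F, x)" by force
    have "Ssum (p # L) \<omega> = (\<lambda>t y. indicator F \<omega> * x t y + Ssum L \<omega> t y)"
      by (simp add: Ssum_def p)
    then show ?case using Cons Padd inEP p by auto
  qed
  let ?R = "restrict_space borel {0..T}"
  define f where "f n = (\<lambda>z. enn2real (Nrm (snd z) (Ssum (s n) (fst z))))" for n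
  have meas: "f n \<in> borel_measurable (G \<Otimes>\<^sub>M ?R)" for n
  proof -
    have "f n = (\<lambda>z. (\<lambda>bs \<tau>. enn2real (Nrm \<tau> (Ev (s n) bs))) (map (\<lambda>p. fst z \<in> fst p) (s n)) (snd z))"
      by (simp add: f_def Ssum_Ev)
    also have "\<dots> \<in> borel_measurable (G \<Otimes>\<^sub>M ?R)"
    proof (rule meas_list)
      show "\<forall>p\<in>set (s n). fst p \<in> sets G" using s1 by fastforce
      fix bs
      have "(\<lambda>\<tau>. Nrm \<tau> (Ev (s n) bs)) \<in> borel_measurable borel"
        by (rule mono_ennreal_borel[OF mono])
      then have "(\<lambda>\<tau>. enn2real (Nrm \<tau> (Ev (s n) bs))) \<in> borel_measurable borel"
        by measurable
      then show "(\<lambda>\<tau>. enn2real (Nrm \<tau> (Ev (s n) bs))) \<in> borel_measurable ?R"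
        by (rule measurable_restrict_space1)
    qed
    finally show ?thesis .
  qed
  have conv: "(\<lambda>n. f n z) \<longlonglongrightarrow> (\<lambda>(\<omega>, \<tau>). enn2real (Nrm \<tau> (v \<omega>))) z"
    if z: "z \<in> space (G \<Otimes>\<^sub>M ?R)" for z
  proof -
    obtain \<omega> \<tau> where zz: "z = (\<omega>, \<tau>)" by force
    have \<omega>: "\<omega> \<in> space G" and \<tau>: "\<tau> \<in> {0..T}"
      using z zz by (auto simp: space_pair_measure space_restrict_space)
    define A where "A = Nrm \<tau> (v \<omega>)"
    define a where "a n = Nrm \<tau> (Ssum (s n) \<omega>)" for n
    define d where "d n = Nrm T (\<lambda>t y. Ssum (s n) \<omega> t y - v \<omega> t y)" for n
    have Pv: "P (v \<omega>)" using vin \<omega> inEP by auto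
    have Ps: "P (Ssum (s n) \<omega>)" for n using s1 PS by fastforce
    have h1: "a n \<le> A + d n" for n
      unfolding a_def A_def d_def using tri[OF Ps Pv, of \<tau> n] \<tau> by auto
    have h2: "A \<le> a n + d n" for n
    proof -
      have "A \<le> a n + Nrm T (\<lambda>t y. v \<omega> t y - Ssum (s n) \<omega> t y)"
        unfolding a_def A_def using tri[OF Pv Ps, of \<tau> n] \<tau> by auto
      also have "Nrm T (\<lambda>t y. v \<omega> t y - Ssum (s n) \<omega> t y) = d n"
        unfolding d_def using neg[of T "\<lambda>t y. Ssum (s n) \<omega> t y - v \<omega> t y"] by simp
      finally show ?thesis .
    qed
    have Afin: "A < \<infinity>"
      using mono[of "v \<omega>"] \<tau> fin \<omega> unfolding A_def mono_def
      by (meson atLeastAtMost_iff le_less_trans)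
    have d0: "d \<longlonglongrightarrow> 0" using s2 \<omega> unfolding d_def by auto
    have ev: "eventually (\<lambda>n. d n < 1) sequentially"
      using order_tendstoD(2)[OF d0, of 1] by simp
    have dr: "(\<lambda>n. enn2real (d n)) \<longlonglongrightarrow> 0"
      using tendsto_enn2real[of d 0] d0 by simp
    have low: "eventually (\<lambda>n. enn2real A - enn2real (d n) \<le> enn2real (a n)) sequentially"
      using ev
    proof (rule eventually_mono)
      fix n assume "d n < 1"
      then have df: "d n < \<infinity>" using less_trans by fastforce
      have af: "a n < \<infinity>" using h1[of n] Afin df
        by (metis ennreal_add_eq_top infinity_ennreal_def le_less_trans top.not_eq_extremum)
      have "enn2real A \<le> enn2real (a n + d n)"
        using h2[of n] af df by (intro enn2real_mono) (auto simp: ennreal_add_eq_top)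
      also have "\<dots> = enn2real (a n) + enn2real (d n)"
        using af df by (simp add: enn2real_plus)
      finally show "enn2real A - enn2real (d n) \<le> enn2real (a n)" by simp
    qed
    have up: "eventually (\<lambda>n. enn2real (a n) \<le> enn2real A + enn2real (d n)) sequentially"
      using ev
    proof (rule eventually_mono)
      fix n assume "d n < 1"
      then have df: "d n < \<infinity>" using less_trans by fastforce
      have "enn2real (a n) \<le> enn2real (A + d n)"
        using h1[of n] Afin df by (intro enn2real_mono) (auto simp: ennreal_add_eq_top)
      also have "\<dots> = enn2real A + enn2real (d n)"
        using Afin df by (simp add: enn2real_plus)
      finally show "enn2real (a n) \<le> enn2real A + enn2real (d n)" .
    qed
    have "(\<lambda>n. enn2real (a n)) \<longlonglongrightarrow> enn2real A"
      using tendsto_sandwich[OF low up] tendsto_diff[OF tendsto_const dr, of "enn2real A"]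
        tendsto_add[OF tendsto_const dr, of "enn2real A"] by simp
    then show ?thesis unfolding f_def a_def A_def zz by simp
  qed
  show ?thesis
    by (rule borel_measurable_LIMSEQ_real[OF conv meas])
qed

lemma cont_bound:
  fixes h :: "real^3 \<Rightarrow> real"
  assumes "continuous_on UNIV h" and "\<forall>\<xi>. R \<le> norm \<xi> \<longrightarrow> h \<xi> = 0"
  shows "\<exists>B\<ge>0. \<forall>\<xi>. \<bar>h \<xi>\<bar> \<le> B"
proof -
  have "compact (h ` cball 0 R)"
    using assms(1) by (intro compact_continuous_image) (auto intro: continuous_on_subset)
  then obtain B where B: "\<forall>x\<in>h ` cball 0 R. norm x \<le> B"
    using compact_imp_bounded bounded_iff by metis
  show ?thesis
  proof (intro exI[of _ "max B 0"] conjI allI)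
    fix \<xi>
    show "\<bar>h \<xi>\<bar> \<le> max B 0"
    proof (cases "norm \<xi> \<le> R")
      case True
      then have "h \<xi> \<in> h ` cball 0 R" by auto
      then have "norm (h \<xi>) \<le> B" using B by blast
      then show ?thesis by simp
    next
      case False then show ?thesis using assms(2) by auto
    qed
  qed simp
qed

lemma csupp_int:
  fixes h :: "real^3 \<Rightarrow> real"
  assumes "continuous_on UNIV h" and "\<forall>\<xi>. R \<le> norm \<xi> \<longrightarrow> h \<xi> = 0"
  shows "integrable lborel h"
proof -
  obtain B where B: "B \<ge> 0" "\<forall>\<xi>. \<bar>h \<xi>\<bar> \<le> B" using cont_bound[OF assms] by blast
  have m: "h \<in> borel_measurable lborel"
    using borel_measurable_continuous_onI[OF assms(1)] by simp
  have "integrable lborel (\<lambda>\<xi>. B * indicator (cball (0::real^3) R) \<xi>)"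
    by (intro integrable_mult_right integrable_real_indicator emeasure_bounded_finite) auto
  then show ?thesis
  proof (rule Bochner_Integration.integrable_bound)
    show "AE x in lborel. norm (h x) \<le> norm (B * indicator (cball (0::real^3) R) x)"
      using B assms(2) by (auto simp: indicator_def not_le)
  qed (use m in auto)
qed

lemma integral_translate:
  fixes h :: "real^3 \<Rightarrow> real"
  assumes "h \<in> borel_measurable borel"
  shows "integral\<^sup>L lborel (\<lambda>\<xi>. h (\<xi> + c)) = integral\<^sup>L lborel h"
proof -
  have "integral\<^sup>L lborel h = integral\<^sup>L (distr lborel borel ((+) c)) h"
    by (simp add: lborel_distr_plus)
  also have "\<dots> = integral\<^sup>L lborel (\<lambda>x. h (c + x))"
    by (rule integral_distr) (use assms in auto)
  finally show ?thesis by (simp add: add.commute)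
qed

lemma core_zero:
  fixes h h' :: "real^3 \<Rightarrow> real" and e :: "real^3"
  assumes hc: "continuous_on UNIV h" and h'c: "continuous_on UNIV h'"
    and der: "\<forall>\<xi> t. ((\<lambda>s. h (\<xi> + s *\<^sub>R e)) has_real_derivative h' (\<xi> + t *\<^sub>R e)) (at t)"
    and supp: "\<forall>\<xi>. R \<le> norm \<xi> \<longrightarrow> h \<xi> = 0 \<and> h' \<xi> = 0"
    and e: "norm e = 1"
  shows "integral\<^sup>L lborel h' = 0"
proof -
  obtain B where B: "B \<ge> 0" "\<forall>\<xi>. \<bar>h' \<xi>\<bar> \<le> B" using cont_bound[OF h'c] supp by blast
  define t where "t n = inverse (real (Suc n))" for n
  have t0: "t n > 0" "t n \<le> 1" for n by (auto simp: t_def field_simps)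
  define q where "q n \<xi> = (h (\<xi> + t n *\<^sub>R e) - h \<xi>) / t n" for n \<xi>
  have hm: "h \<in> borel_measurable borel" using borel_measurable_continuous_onI[OF hc] .
  have h'm: "h' \<in> borel_measurable lborel" using borel_measurable_continuous_onI[OF h'c] by simp
  have qm: "q n \<in> borel_measurable lborel" for n
    unfolding q_def using hm by measurable
  have hsh: "integrable lborel (\<lambda>\<xi>. h (\<xi> + c))" for c
  proof (rule csupp_int[where R="R + norm c"])
    show "continuous_on UNIV (\<lambda>\<xi>. h (\<xi> + c))"
      by (rule continuous_on_compose2[OF hc]) (auto intro!: continuous_intros)
    show "\<forall>\<xi>. R + norm c \<le> norm \<xi> \<longrightarrow> h (\<xi> + c) = 0"
    proof (intro allI impI)
      fix \<xi> :: "real^3" assume "R + norm c \<le> norm \<xi>"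
      moreover have "norm \<xi> \<le> norm (\<xi> + c) + norm c"
        using norm_triangle_ineq4[of "\<xi> + c" c] by simp
      ultimately show "h (\<xi> + c) = 0" using supp by auto
    qed
  qed
  have hi: "integrable lborel h" using hsh[of 0] by simp
  have qint: "integral\<^sup>L lborel (q n) = 0" for n
  proof -
    have "integral\<^sup>L lborel (q n) =
        (integral\<^sup>L lborel (\<lambda>\<xi>. h (\<xi> + t n *\<^sub>R e)) - integral\<^sup>L lborel h) / t n"
      unfolding q_def using hsh hi by (simp add: integral_diff)
    also have "\<dots> = 0" using integral_translate[OF hm] by simp
    finally show ?thesis .
  qed
  have lim: "(\<lambda>n. q n \<xi>) \<longlonglongrightarrow> h' \<xi>" for \<xi>
  proof -
    have d: "((\<lambda>s. h (\<xi> + s *\<^sub>R e)) has_real_derivative h' \<xi>) (at 0)"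
      using der[rule_format, of \<xi> 0] by simp
    have "((\<lambda>s. (h (\<xi> + (0 + s) *\<^sub>R e) - h (\<xi> + 0 *\<^sub>R e)) / s) \<longlongrightarrow> h' \<xi>) (at 0)"
      using DERIV_D[OF d] .
    moreover have "filterlim t (at 0) sequentially"
      unfolding t_def
      by (rule filterlim_atI[OF LIMSEQ_inverse_real_of_nat]) auto
    ultimately have "((\<lambda>n. (h (\<xi> + (0 + t n) *\<^sub>R e) - h (\<xi> + 0 *\<^sub>R e)) / t n) \<longlongrightarrow> h' \<xi>) sequentially"
      by (rule filterlim_compose)
    then show ?thesis unfolding q_def by simp
  qed
  have bound: "\<bar>q n \<xi>\<bar> \<le> B * indicator (cball 0 (R + 1)) \<xi>" for n \<xi>
  proof (cases "norm \<xi> \<le> R + 1")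
    case True
    obtain z where z: "0 < z" "z < t n"
      "h (\<xi> + t n *\<^sub>R e) - h (\<xi> + 0 *\<^sub>R e) = (t n - 0) * h' (\<xi> + z *\<^sub>R e)"
      using MVT2[of 0 "t n" "\<lambda>s. h (\<xi> + s *\<^sub>R e)" "\<lambda>s. h' (\<xi> + s *\<^sub>R e)"] t0[of n] der by blast
    have "\<bar>q n \<xi>\<bar> = \<bar>h' (\<xi> + z *\<^sub>R e)\<bar>"
      unfolding q_def using z t0[of n] by (simp add: abs_mult)
    also have "\<dots> \<le> B" using B by auto
    finally show ?thesis using True by (simp add: indicator_def)
  next
    case False
    have "norm \<xi> \<le> norm (\<xi> + t n *\<^sub>R e) + norm (t n *\<^sub>R e)"
      using norm_triangle_ineq4[of "\<xi> + t n *\<^sub>R e" "t n *\<^sub>R e"] by simp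
    moreover have "norm (t n *\<^sub>R e) \<le> 1" using t0[of n] e by simp
    ultimately have "R \<le> norm (\<xi> + t n *\<^sub>R e)" using False by simp
    moreover have "R \<le> norm \<xi>" using False by simp
    ultimately have "q n \<xi> = 0" unfolding q_def using supp by simp
    then show ?thesis using B by (simp add: indicator_def)
  qed
  have wint: "integrable lborel (\<lambda>\<xi>. B * indicator (cball (0::real^3) (R + 1)) \<xi>)"
    by (intro integrable_mult_right integrable_real_indicator emeasure_bounded_finite) auto
  have "(\<lambda>n. integral\<^sup>L lborel (q n)) \<longlonglongrightarrow> integral\<^sup>L lborel h'"
    by (rule integral_dominated_convergence[OF h'm qm wint]) (use lim bound in auto)
  then show ?thesis using qint by (simp add: LIMSEQ_const_iff)
qed

lemma ibp_cs:
  fixes g g' :: "real^3 \<Rightarrow> real" and e z :: "real^3"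
  assumes gc: "continuous_on UNIV g" and g'c: "continuous_on UNIV g'"
    and der: "\<forall>\<xi> t. ((\<lambda>s. g (\<xi> + s *\<^sub>R e)) has_real_derivative g' (\<xi> + t *\<^sub>R e)) (at t)"
    and supp: "\<forall>\<xi>. R \<le> norm \<xi> \<longrightarrow> g \<xi> = 0 \<and> g' \<xi> = 0"
    and e: "norm e = 1"
  shows "integral\<^sup>L lborel (\<lambda>\<xi>. g' \<xi> * cos (z \<bullet> \<xi>)) = (z \<bullet> e) * integral\<^sup>L lborel (\<lambda>\<xi>. g \<xi> * sin (z \<bullet> \<xi>))"
    and "integral\<^sup>L lborel (\<lambda>\<xi>. g' \<xi> * sin (z \<bullet> \<xi>)) = - (z \<bullet> e) * integral\<^sup>L lborel (\<lambda>\<xi>. g \<xi> * cos (z \<bullet> \<xi>))"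
proof -
  define a where "a = z \<bullet> e"
  have ccos: "continuous_on UNIV (\<lambda>\<xi>::real^3. cos (z \<bullet> \<xi>))"
    by (intro continuous_intros)
  have csin: "continuous_on UNIV (\<lambda>\<xi>::real^3. sin (z \<bullet> \<xi>))"
    by (intro continuous_intros)
  have I: "integrable lborel (\<lambda>\<xi>. f \<xi> * w \<xi>)"
    if "continuous_on UNIV f" "continuous_on UNIV w" "\<forall>\<xi>. R \<le> norm \<xi> \<longrightarrow> f \<xi> = 0" for f w :: "real^3 \<Rightarrow> real"
    by (rule csupp_int[where R=R]) (use that in \<open>auto intro!: continuous_intros\<close>)
  have lin: "z \<bullet> (\<xi> + s *\<^sub>R e) = z \<bullet> \<xi> + s * a" for \<xi> s
    by (simp add: a_def inner_add_right)
  have d1: "((\<lambda>s. g (\<xi> + s *\<^sub>R e) * cos (z \<bullet> (\<xi> + s *\<^sub>R e))) has_real_derivative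
      (g' (\<xi> + t *\<^sub>R e) * cos (z \<bullet> (\<xi> + t *\<^sub>R e)) - a * (g (\<xi> + t *\<^sub>R e) * sin (z \<bullet> (\<xi> + t *\<^sub>R e))))) (at t)" for \<xi> t
    unfolding lin
    by (rule derivative_eq_intros der[rule_format] refl | simp add: algebra_simps)+
  have d2: "((\<lambda>s. g (\<xi> + s *\<^sub>R e) * sin (z \<bullet> (\<xi> + s *\<^sub>R e))) has_real_derivative
      (g' (\<xi> + t *\<^sub>R e) * sin (z \<bullet> (\<xi> + t *\<^sub>R e)) + a * (g (\<xi> + t *\<^sub>R e) * cos (z \<bullet> (\<xi> + t *\<^sub>R e))))) (at t)" for \<xi> t
    unfolding lin
    by (rule derivative_eq_intros der[rule_format] refl | simp add: algebra_simps)+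
  have z1: "integral\<^sup>L lborel (\<lambda>\<xi>. g' \<xi> * cos (z \<bullet> \<xi>) - a * (g \<xi> * sin (z \<bullet> \<xi>))) = 0"
    by (rule core_zero[where h="\<lambda>\<xi>. g \<xi> * cos (z \<bullet> \<xi>)" and e=e and R=R])
       (use gc g'c supp e d1 in \<open>auto intro!: continuous_intros\<close>)
  have z2: "integral\<^sup>L lborel (\<lambda>\<xi>. g' \<xi> * sin (z \<bullet> \<xi>) + a * (g \<xi> * cos (z \<bullet> \<xi>))) = 0"
    by (rule core_zero[where h="\<lambda>\<xi>. g \<xi> * sin (z \<bullet> \<xi>)" and e=e and R=R])
       (use gc g'c supp e d2 in \<open>auto intro!: continuous_intros\<close>)
  have i1: "integrable lborel (\<lambda>\<xi>. g' \<xi> * cos (z \<bullet> \<xi>))" using I[OF g'c ccos] supp by auto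
  have i2: "integrable lborel (\<lambda>\<xi>. g' \<xi> * sin (z \<bullet> \<xi>))" using I[OF g'c csin] supp by auto
  have i3: "integrable lborel (\<lambda>\<xi>. g \<xi> * cos (z \<bullet> \<xi>))" using I[OF gc ccos] supp by auto
  have i4: "integrable lborel (\<lambda>\<xi>. g \<xi> * sin (z \<bullet> \<xi>))" using I[OF gc csin] supp by auto
  show "integral\<^sup>L lborel (\<lambda>\<xi>. g' \<xi> * cos (z \<bullet> \<xi>)) = (z \<bullet> e) * integral\<^sup>L lborel (\<lambda>\<xi>. g \<xi> * sin (z \<bullet> \<xi>))"
    using z1 i1 i4 by (simp add: integral_diff a_def)
  show "integral\<^sup>L lborel (\<lambda>\<xi>. g' \<xi> * sin (z \<bullet> \<xi>)) = - (z \<bullet> e) * integral\<^sup>L lborel (\<lambda>\<xi>. g \<xi> * cos (z \<bullet> \<xi>))"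
    using z2 i2 i3 by (simp add: integral_add a_def)
qed

definition dgood :: "real \<Rightarrow> (real^3 \<Rightarrow> real) \<Rightarrow> (nat \<Rightarrow> real^3 \<Rightarrow> real) \<Rightarrow> real^3 \<Rightarrow> bool" where
  "dgood R g G e \<longleftrightarrow> G 0 = g \<and> (\<forall>j. continuous_on UNIV (G j)) \<and>
     (\<forall>j \<xi> t. ((\<lambda>s. G j (\<xi> + s *\<^sub>R e)) has_real_derivative G (Suc j) (\<xi> + t *\<^sub>R e)) (at t)) \<and>
     (\<forall>j \<xi>. R \<le> norm \<xi> \<longrightarrow> G j \<xi> = 0)"

lemma cis_integral_parts:
  fixes g :: "real^3 \<Rightarrow> real"
  assumes gc: "continuous_on UNIV g" and supp: "\<forall>\<xi>. R \<le> norm \<xi> \<longrightarrow> g \<xi> = 0"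
  shows "integrable lborel (\<lambda>\<xi>. complex_of_real (g \<xi>) * cis (z \<bullet> \<xi>))"
    and "cmod (LINT \<xi>|lborel. complex_of_real (g \<xi>) * cis (z \<bullet> \<xi>)) \<le>
      \<bar>integral\<^sup>L lborel (\<lambda>\<xi>. g \<xi> * cos (z \<bullet> \<xi>))\<bar> + \<bar>integral\<^sup>L lborel (\<lambda>\<xi>. g \<xi> * sin (z \<bullet> \<xi>))\<bar>"
proof -
  have gi: "integrable lborel g" by (rule csupp_int[OF gc supp])
  have m: "(\<lambda>\<xi>. complex_of_real (g \<xi>) * cis (z \<bullet> \<xi>)) \<in> borel_measurable lborel"
  proof -
    have "continuous_on UNIV (\<lambda>\<xi>. complex_of_real (g \<xi>) * cis (z \<bullet> \<xi>))"
      by (intro continuous_intros gc)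
    then show ?thesis using borel_measurable_continuous_onI by simp
  qed
  show I: "integrable lborel (\<lambda>\<xi>. complex_of_real (g \<xi>) * cis (z \<bullet> \<xi>))"
    by (rule Bochner_Integration.integrable_bound[OF integrable_abs[OF gi] m])
       (auto simp: norm_mult)
  have re: "Re (LINT \<xi>|lborel. complex_of_real (g \<xi>) * cis (z \<bullet> \<xi>)) = integral\<^sup>L lborel (\<lambda>\<xi>. g \<xi> * cos (z \<bullet> \<xi>))"
    using integral_Re[OF I] by simp
  have im: "Im (LINT \<xi>|lborel. complex_of_real (g \<xi>) * cis (z \<bullet> \<xi>)) = integral\<^sup>L lborel (\<lambda>\<xi>. g \<xi> * sin (z \<bullet> \<xi>))"
    using integral_Im[OF I] by simp
  show "cmod (LINT \<xi>|lborel. complex_of_real (g \<xi>) * cis (z \<bullet> \<xi>)) \<le>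
      \<bar>integral\<^sup>L lborel (\<lambda>\<xi>. g \<xi> * cos (z \<bullet> \<xi>))\<bar> + \<bar>integral\<^sup>L lborel (\<lambda>\<xi>. g \<xi> * sin (z \<bullet> \<xi>))\<bar>"
    using cmod_le re im by metis
qed

lemma abs_cs_bound:
  fixes g :: "real^3 \<Rightarrow> real"
  assumes gc: "continuous_on UNIV g" and supp: "\<forall>\<xi>. R \<le> norm \<xi> \<longrightarrow> g \<xi> = 0"
  shows "\<bar>integral\<^sup>L lborel (\<lambda>\<xi>. g \<xi> * cos (z \<bullet> \<xi>))\<bar> \<le> integral\<^sup>L lborel (\<lambda>\<xi>. \<bar>g \<xi>\<bar>)"
    and "\<bar>integral\<^sup>L lborel (\<lambda>\<xi>. g \<xi> * sin (z \<bullet> \<xi>))\<bar> \<le> integral\<^sup>L lborel (\<lambda>\<xi>. \<bar>g \<xi>\<bar>)"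
proof -
  have gi: "integrable lborel g" by (rule csupp_int[OF gc supp])
  have I: "integrable lborel (\<lambda>\<xi>. g \<xi> * w \<xi>)" if "continuous_on UNIV w" for w :: "real^3 \<Rightarrow> real"
    by (rule csupp_int[where R=R]) (use that gc supp in \<open>auto intro!: continuous_intros\<close>)
  show "\<bar>integral\<^sup>L lborel (\<lambda>\<xi>. g \<xi> * cos (z \<bullet> \<xi>))\<bar> \<le> integral\<^sup>L lborel (\<lambda>\<xi>. \<bar>g \<xi>\<bar>)"
    by (rule integral_abs_bound_integral[OF I integrable_abs[OF gi]])
       (auto intro!: continuous_intros simp: abs_mult mult_left_le)
  show "\<bar>integral\<^sup>L lborel (\<lambda>\<xi>. g \<xi> * sin (z \<bullet> \<xi>))\<bar> \<le> integral\<^sup>L lborel (\<lambda>\<xi>. \<bar>g \<xi>\<bar>)"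
    by (rule integral_abs_bound_integral[OF I integrable_abs[OF gi]])
       (auto intro!: continuous_intros simp: abs_mult mult_left_le)
qed

lemma dgood_bound:
  assumes dg: "dgood R g G e" and e: "norm e = 1"
  shows "(z \<bullet> e) ^ 4 * cmod (LINT \<xi>|lborel. complex_of_real (g \<xi>) * cis (z \<bullet> \<xi>))
           \<le> 2 * integral\<^sup>L lborel (\<lambda>\<xi>. \<bar>G 4 \<xi>\<bar>)"
    and "cmod (LINT \<xi>|lborel. complex_of_real (g \<xi>) * cis (z \<bullet> \<xi>))
           \<le> 2 * integral\<^sup>L lborel (\<lambda>\<xi>. \<bar>g \<xi>\<bar>)"
proof -
  have G0: "G 0 = g" and Gc: "\<And>j. continuous_on UNIV (G j)"
    and Gd: "\<And>j. \<forall>\<xi> t. ((\<lambda>s. G j (\<xi> + s *\<^sub>R e)) has_real_derivative G (Suc j) (\<xi> + t *\<^sub>R e)) (at t)"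
    and Gs: "\<And>j. \<forall>\<xi>. R \<le> norm \<xi> \<longrightarrow> G j \<xi> = 0"
    using dg unfolding dgood_def by auto
  define a where "a = z \<bullet> e"
  define C where "C j = integral\<^sup>L lborel (\<lambda>\<xi>. G j \<xi> * cos (z \<bullet> \<xi>))" for j
  define S where "S j = integral\<^sup>L lborel (\<lambda>\<xi>. G j \<xi> * sin (z \<bullet> \<xi>))" for j
  have rec: "C (Suc j) = a * S j \<and> S (Suc j) = - a * C j" for j
    using ibp_cs[where g="G j" and g'="G (Suc j)" and R=R and e=e and z=z, OF Gc Gc Gd _ e] Gs
    unfolding C_def S_def a_def by auto
  have C4: "C 4 = a ^ 4 * C 0" and S4: "S 4 = a ^ 4 * S 0"
    using rec[of 0] rec[of 1] rec[of 2] rec[of 3] by (simp_all add: numeral_eq_Suc power_def algebra_simps)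
  have w: "cmod (LINT \<xi>|lborel. complex_of_real (g \<xi>) * cis (z \<bullet> \<xi>)) \<le> \<bar>C 0\<bar> + \<bar>S 0\<bar>"
    using cis_integral_parts(2)[OF Gc Gs, of 0 z] G0 unfolding C_def S_def by simp
  have b4: "\<bar>C 4\<bar> \<le> integral\<^sup>L lborel (\<lambda>\<xi>. \<bar>G 4 \<xi>\<bar>)" "\<bar>S 4\<bar> \<le> integral\<^sup>L lborel (\<lambda>\<xi>. \<bar>G 4 \<xi>\<bar>)"
    using abs_cs_bound[OF Gc Gs, of 4 z] unfolding C_def S_def by auto
  have b0: "\<bar>C 0\<bar> \<le> integral\<^sup>L lborel (\<lambda>\<xi>. \<bar>g \<xi>\<bar>)" "\<bar>S 0\<bar> \<le> integral\<^sup>L lborel (\<lambda>\<xi>. \<bar>g \<xi>\<bar>)"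
    using abs_cs_bound[OF Gc Gs, of 0 z] G0 unfolding C_def S_def by auto
  have "a ^ 4 * cmod (LINT \<xi>|lborel. complex_of_real (g \<xi>) * cis (z \<bullet> \<xi>)) \<le> a ^ 4 * (\<bar>C 0\<bar> + \<bar>S 0\<bar>)"
    by (rule mult_left_mono[OF w]) simp
  also have "\<dots> = \<bar>C 4\<bar> + \<bar>S 4\<bar>"
    by (simp add: C4 S4 abs_mult distrib_left)
  also have "\<dots> \<le> 2 * integral\<^sup>L lborel (\<lambda>\<xi>. \<bar>G 4 \<xi>\<bar>)" using b4 by simp
  finally show "(z \<bullet> e) ^ 4 * cmod (LINT \<xi>|lborel. complex_of_real (g \<xi>) * cis (z \<bullet> \<xi>))
           \<le> 2 * integral\<^sup>L lborel (\<lambda>\<xi>. \<bar>G 4 \<xi>\<bar>)" unfolding a_def .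
  show "cmod (LINT \<xi>|lborel. complex_of_real (g \<xi>) * cis (z \<bullet> \<xi>))
           \<le> 2 * integral\<^sup>L lborel (\<lambda>\<xi>. \<bar>g \<xi>\<bar>)" using w b0 by simp
qed

lemma smooth_F:
  assumes "smooth3 \<phi>" and supp: "\<forall>\<xi>. norm \<xi> \<ge> 2 \<longrightarrow> \<phi> \<xi> = 0"
  shows "\<exists>F. F [] = \<phi> \<and> (\<forall>ds x. (F ds has_derivative (\<lambda>h. F (h # ds) x)) (at x)) \<and>
     (\<forall>ds x. norm x > 2 \<longrightarrow> F ds x = 0)"
proof -
  obtain F :: "(real^3) list \<Rightarrow> real^3 \<Rightarrow> real" where F0: "F [] = \<phi>"
    and Fd: "\<And>ds x. (F ds has_derivative (\<lambda>h. F (h # ds) x)) (at x)"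
    using assms(1) unfolding smooth3_def by blast
  have van: "\<forall>x. norm x > 2 \<longrightarrow> F ds x = 0" for ds
  proof (induction ds)
    case Nil
    then show ?case using F0 supp by auto
  next
    case (Cons h ds)
    show ?case
    proof (intro allI impI)
      fix x :: "real^3" assume x: "norm x > 2"
      have c0: "((\<lambda>y::real^3. 0::real) has_derivative (\<lambda>h. 0)) (at x)" by simp
      have op: "open {x::real^3. norm x > 2}" by (intro open_Collect_less continuous_intros)
      have "(F ds has_derivative (\<lambda>h. 0)) (at x)"
        by (rule has_derivative_transform_within_open[OF c0 op]) (use x Cons.IH in auto)
      then have "(\<lambda>h. F (h # ds) x) = (\<lambda>h. 0)" using has_derivative_unique[OF Fd] by blast
      then show "F (h # ds) x = 0" by metis
    qed
  qed
  show ?thesis using F0 Fd van by blast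
qed

lemma dgood_scaled:
  assumes "smooth3 \<phi>" and supp: "\<forall>\<xi>. norm \<xi> \<ge> 2 \<longrightarrow> \<phi> \<xi> = 0" and c: "c > 0"
  shows "\<exists>G. dgood (3 / c) (\<lambda>\<xi>. \<phi> (c *\<^sub>R \<xi>)) G e"
proof -
  obtain F :: "(real^3) list \<Rightarrow> real^3 \<Rightarrow> real" where F0: "F [] = \<phi>"
    and Fd: "\<And>ds x. (F ds has_derivative (\<lambda>h. F (h # ds) x)) (at x)"
    and Fv: "\<And>ds x. norm x > 2 \<Longrightarrow> F ds x = 0"
    using smooth_F[OF assms(1,2)] by blast
  define G where "G j \<xi> = c ^ j * F (replicate j e) (c *\<^sub>R \<xi>)" for j \<xi>
  have Fc: "continuous_on UNIV (F ds)" for ds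
    by (rule continuous_at_imp_continuous_on) (use has_derivative_continuous[OF Fd] in auto)
  have "G 0 = (\<lambda>\<xi>. \<phi> (c *\<^sub>R \<xi>))" by (simp add: G_def F0 fun_eq_iff)
  moreover have "continuous_on UNIV (G j)" for j
    unfolding G_def
    by (intro continuous_intros continuous_on_compose2[OF Fc[of "replicate j e"]]) auto
  moreover have "((\<lambda>s. G j (\<xi> + s *\<^sub>R e)) has_real_derivative G (Suc j) (\<xi> + t *\<^sub>R e)) (at t)" for j \<xi> t
  proof -
    define ds where "ds = replicate j e"
    define p where "p = c *\<^sub>R (\<xi> + t *\<^sub>R e)"
    have g: "((\<lambda>s. c *\<^sub>R (\<xi> + s *\<^sub>R e)) has_derivative (\<lambda>h. h *\<^sub>R (c *\<^sub>R e))) (at t)"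
      by (rule derivative_eq_intros refl | simp add: algebra_simps)+
    have "((\<lambda>s. F ds (c *\<^sub>R (\<xi> + s *\<^sub>R e))) has_derivative (\<lambda>h. F ((h *\<^sub>R (c *\<^sub>R e)) # ds) p)) (at t)"
      using has_derivative_compose[OF g, of "F ds" "\<lambda>h. F (h # ds) p"] Fd[of ds p] unfolding p_def by simp
    moreover have "F ((h *\<^sub>R (c *\<^sub>R e)) # ds) p = (c * F (e # ds) p) * h" for h
    proof -
      have "linear (\<lambda>h. F (h # ds) p)"
        using has_derivative_bounded_linear[OF Fd[of ds p]] bounded_linear.linear by blast
      then have "F (((h * c) *\<^sub>R e) # ds) p = (h * c) *\<^sub>R F (e # ds) p"
        using linear_scale by fastforce
      then show ?thesis by (simp add: algebra_simps)
    qed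
    ultimately have "((\<lambda>s. F ds (c *\<^sub>R (\<xi> + s *\<^sub>R e))) has_derivative (\<lambda>h. (c * F (e # ds) p) * h)) (at t)"
      by simp
    then have "((\<lambda>s. F ds (c *\<^sub>R (\<xi> + s *\<^sub>R e))) has_real_derivative (c * F (e # ds) p)) (at t)"
      by (simp add: has_field_derivative_def)
    then have "((\<lambda>s. c ^ j * F ds (c *\<^sub>R (\<xi> + s *\<^sub>R e))) has_real_derivative c ^ j * (c * F (e # ds) p)) (at t)"
      by (rule DERIV_cmult)
    then show ?thesis unfolding G_def ds_def p_def by (simp add: algebra_simps)
  qed
  moreover have "G j \<xi> = 0" if "3 / c \<le> norm \<xi>" for j \<xi>
  proof -
    have "3 \<le> c * norm \<xi>" using that c by (simp add: field_simps)
    then have "norm (c *\<^sub>R \<xi>) > 2" using c by simp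
    then show ?thesis unfolding G_def using Fv by simp
  qed
  ultimately show ?thesis unfolding dgood_def by blast
qed

lemma dgood_diff:
  assumes "dgood R1 g1 G1 e" "dgood R2 g2 G2 e"
  shows "dgood (max R1 R2) (\<lambda>\<xi>. g1 \<xi> - g2 \<xi>) (\<lambda>j \<xi>. G1 j \<xi> - G2 j \<xi>) e"
  using assms unfolding dgood_def
  by (auto intro!: continuous_intros DERIV_diff)

lemma psi_dgood:
  assumes "smooth3 \<phi>" and supp: "\<forall>\<xi>. norm \<xi> \<ge> 2 \<longrightarrow> \<phi> \<xi> = 0" and M: "M > 0"
  shows "\<exists>R G. dgood R (psi \<phi> M) G e"
proof (cases "M = 1")
  case True
  obtain G where "dgood (3 / 1) (\<lambda>\<xi>. \<phi> (1 *\<^sub>R \<xi>)) G e" using dgood_scaled[OF assms(1,2), of 1] by auto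
  moreover have "(\<lambda>\<xi>. \<phi> (1 *\<^sub>R \<xi>)) = psi \<phi> M" using True by (simp add: psi_def fun_eq_iff)
  ultimately show ?thesis by metis
next
  case False
  obtain G1 where G1: "dgood (3 / (1/M)) (\<lambda>\<xi>. \<phi> ((1/M) *\<^sub>R \<xi>)) G1 e"
    using dgood_scaled[OF assms(1,2), of "1/M"] M by auto
  obtain G2 where G2: "dgood (3 / (2/M)) (\<lambda>\<xi>. \<phi> ((2/M) *\<^sub>R \<xi>)) G2 e"
    using dgood_scaled[OF assms(1,2), of "2/M"] M by auto
  have "psi \<phi> M = (\<lambda>\<xi>. \<phi> ((1/M) *\<^sub>R \<xi>) - \<phi> ((2/M) *\<^sub>R \<xi>))"
    using False by (auto simp: psi_def fun_eq_iff)
  then show ?thesis using dgood_diff[OF G1 G2] by metis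
qed

definition cube :: "nat \<Rightarrow> (real^3) set" where
  "cube n = cbox (- ((2::real) ^ n *\<^sub>R One)) ((2::real) ^ n *\<^sub>R One)"

lemma mem_cube: "z \<in> cube n \<longleftrightarrow> (\<forall>b\<in>Basis. \<bar>z \<bullet> b\<bar> \<le> 2 ^ n)"
  unfolding cube_def mem_box by (auto simp: inner_diff_left abs_le_iff)

lemma emeasure_cube: "emeasure lborel (cube n) = ennreal (8 * 8 ^ n)"
proof -
  have e: "((2::real) ^ n *\<^sub>R One - - (2 ^ n *\<^sub>R One)) \<bullet> b = 2 * 2 ^ n" if "b \<in> (Basis::(real^3) set)" for b
    by (simp only: inner_diff_left inner_minus_left inner_scaleR_left inner_sum_Basis[OF that])
  have cond: "\<forall>b\<in>(Basis::(real^3) set). (- ((2::real) ^ n *\<^sub>R One)) \<bullet> b \<le> (2 ^ n *\<^sub>R One) \<bullet> b"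
    by (simp only: inner_minus_left inner_scaleR_left) simp
  have "emeasure lborel (cube n) = ennreal (\<Prod>b\<in>(Basis::(real^3) set). ((2::real) ^ n *\<^sub>R One - - (2 ^ n *\<^sub>R One)) \<bullet> b)"
    unfolding cube_def emeasure_lborel_cbox_eq by (subst if_P[OF cond]) (rule refl)
  also have "(\<Prod>b\<in>(Basis::(real^3) set). ((2::real) ^ n *\<^sub>R One - - (2 ^ n *\<^sub>R One)) \<bullet> b) = (\<Prod>b\<in>(Basis::(real^3) set). 2 * 2 ^ n)"
    by (rule prod.cong[OF refl e])
  also have "(\<Prod>b\<in>(Basis::(real^3) set). (2::real) * 2 ^ n) = (2 * 2 ^ n) ^ 3"
    by (simp only: prod_constant) simp
  also have "(2 * 2 ^ n :: real) ^ 3 = 8 * 8 ^ n"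
  proof -
    have "((2::real) ^ n) ^ 3 = (2 ^ 3) ^ n" by (simp only: power_mult[symmetric] mult.commute)
    then show ?thesis by (simp add: power_mult_distrib)
  qed
  finally show ?thesis .
qed

lemma decay_integrable:
  fixes k :: "real^3 \<Rightarrow> real"
  assumes A: "A \<ge> 0" and k0: "\<And>z. k z \<le> A" and kb: "\<And>z b. b \<in> Basis \<Longrightarrow> (z \<bullet> b) ^ 4 * k z \<le> A"
  shows "(\<integral>\<^sup>+ z. ennreal (k z) \<partial>lborel) < \<infinity>"
proof -
  define c where "c n = A * 16 / 16 ^ n" for n :: nat
  define w where "w z = (\<Sum>n. ennreal (c n) * indicator (cube n) z)" for z
  have dom: "ennreal (k z) \<le> w z" for z
  proof -
    obtain N :: nat where "norm z < real N" using reals_Archimedean2 by blast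
    then have "norm z < 2 ^ N" using of_nat_less_two_power[of N, where 'a=real] by linarith
    then have ex: "z \<in> cube N" unfolding mem_cube using Basis_le_norm[of _ z] by fastforce
    define n where "n = (LEAST n. z \<in> cube n)"
    have zn: "z \<in> cube n" unfolding n_def by (rule LeastI[of "\<lambda>n. z \<in> cube n" N, OF ex])
    have kn: "k z \<le> c n"
    proof (cases n)
      case 0
      then show ?thesis using k0[of z] A by (simp add: c_def)
    next
      case (Suc m)
      have "m < n" using Suc by simp
      then have "z \<notin> cube m" using not_less_Least[of m "\<lambda>n. z \<in> cube n"] unfolding n_def by blast
      then obtain b where b: "b \<in> Basis" "\<bar>z \<bullet> b\<bar> > 2 ^ m" unfolding mem_cube by (meson not_le)
      have pos: "(16::real) ^ m > 0" by simp
      have "((2::real) ^ m) ^ 4 = (2 ^ 4) ^ m" by (simp only: power_mult[symmetric] mult.commute)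
      then have "(16::real) ^ m = (2 ^ m) ^ 4" by simp
      also have "\<dots> < \<bar>z \<bullet> b\<bar> ^ 4" using b(2) by (intro power_strict_mono) auto
      also have "\<dots> = (z \<bullet> b) ^ 4" by (simp add: power_even_abs)
      finally have lt: "16 ^ m < (z \<bullet> b) ^ 4" .
      show ?thesis
      proof (cases "k z \<le> 0")
        case True
        have "0 \<le> A * 16 / 16 ^ n" using A by simp
        then show ?thesis using True by (simp add: c_def)
      next
        case False
        have "16 ^ m * k z \<le> (z \<bullet> b) ^ 4 * k z" using lt False by (intro mult_right_mono) auto
        also have "\<dots> \<le> A" using kb[OF b(1)] .
        finally have "k z \<le> A / 16 ^ m" using pos by (simp add: field_simps)
        then show ?thesis using Suc by (simp add: c_def)
      qed
    qed
    have "ennreal (k z) \<le> ennreal (c n) * indicator (cube n) z"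
      using kn zn by (simp add: ennreal_leI)
    also have "\<dots> \<le> w z"
    proof -
      define f where "f = (\<lambda>i. ennreal (c i) * indicator (cube i) z)"
      have "sum f {n} \<le> suminf f" by (rule sum_le_suminf) (auto simp: summableI)
      then have "f n \<le> suminf f" by simp
      then show ?thesis unfolding w_def f_def by simp
    qed
    finally show ?thesis .
  qed
  have "(\<integral>\<^sup>+ z. w z \<partial>lborel) = (\<Sum>n. \<integral>\<^sup>+ z. ennreal (c n) * indicator (cube n) z \<partial>lborel)"
    unfolding w_def by (rule nn_integral_suminf) (auto simp: cube_def)
  also have "\<dots> = (\<Sum>n. ennreal (c n) * ennreal (8 * 8 ^ n))"
    by (subst nn_integral_cmult_indicator) (auto simp: cube_def emeasure_cube[unfolded cube_def])
  also have "\<dots> = (\<Sum>n. ennreal (128 * A * (1/2) ^ n))"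
  proof (intro suminf_cong)
    fix n :: nat
    have h: "(8::real) ^ n / 16 ^ n = (1/2) ^ n" by (simp add: power_divide[symmetric])
    have "c n * (8 * 8 ^ n) = 128 * A * ((8::real) ^ n / 16 ^ n)"
      unfolding c_def by simp
    then have e: "c n * (8 * 8 ^ n) = 128 * A * (1/2) ^ n" using h by simp
    have "ennreal (c n) * ennreal (8 * 8 ^ n) = ennreal (c n * (8 * 8 ^ n))"
      by (rule ennreal_mult''[symmetric]) simp
    then show "ennreal (c n) * ennreal (8 * 8 ^ n) = ennreal (128 * A * (1/2) ^ n)"
      by (simp only: e)
  qed
  also have "\<dots> < \<infinity>"
  proof -
    have s: "summable (\<lambda>n. 128 * A * (1/2::real) ^ n)"
      by (intro summable_mult summable_geometric) simp
    have "(\<Sum>n. ennreal (128 * A * (1/2) ^ n)) \<noteq> top"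
      by (rule ennreal_suminf_neq_top[OF s]) (use A in simp)
    then show ?thesis by (simp add: less_top[symmetric])
  qed
  finally have "(\<integral>\<^sup>+ z. w z \<partial>lborel) < \<infinity>" .
  moreover have "(\<integral>\<^sup>+ z. ennreal (k z) \<partial>lborel) \<le> (\<integral>\<^sup>+ z. w z \<partial>lborel)"
    by (intro nn_integral_mono dom)
  ultimately show ?thesis by (rule le_less_trans[rotated])
qed

lemma LPK_props:
  assumes sm: "smooth3 \<phi>" and supp: "\<forall>\<xi>. norm \<xi> \<ge> 2 \<longrightarrow> \<phi> \<xi> = 0" and M: "M > 0"
  shows "LP_kernel \<phi> M \<in> borel_measurable borel"
    and "\<exists>C. \<forall>z. cmod (LP_kernel \<phi> M z) \<le> C"
    and "(\<integral>\<^sup>+ z. ennreal (cmod (LP_kernel \<phi> M z)) \<partial>lborel) < \<infinity>"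
proof -
  define I where "I z = (LINT \<xi>|lborel. complex_of_real (psi \<phi> M \<xi>) * cis (z \<bullet> \<xi>))" for z :: "real^3"
  define \<kappa> where "\<kappa> = 1 / (2 * pi) ^ 3"
  have \<kappa>: "\<kappa> > 0" by (simp add: \<kappa>_def)
  have K: "LP_kernel \<phi> M z = complex_of_real \<kappa> * I z" for z
    by (simp add: LP_kernel_def I_def \<kappa>_def)
  obtain b0 :: "real^3" where b0: "b0 \<in> Basis" using nonempty_Basis by blast
  obtain R0 G0 where dg0: "dgood R0 (psi \<phi> M) G0 b0" using psi_dgood[OF sm supp M] by blast
  have pc: "continuous_on UNIV (psi \<phi> M)" using dg0 unfolding dgood_def by metis
  define A0 where "A0 = 2 * integral\<^sup>L lborel (\<lambda>\<xi>. \<bar>psi \<phi> M \<xi>\<bar>)"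
  have A0: "\<And>z. cmod (I z) \<le> A0" "A0 \<ge> 0"
    using dgood_bound(2)[OF dg0] b0 unfolding I_def A0_def by auto
  have "\<forall>b\<in>(Basis::(real^3) set). \<exists>A. A \<ge> 0 \<and> (\<forall>z. (z \<bullet> b) ^ 4 * cmod (I z) \<le> A)"
  proof
    fix b :: "real^3" assume b: "b \<in> Basis"
    obtain R G where dg: "dgood R (psi \<phi> M) G b" using psi_dgood[OF sm supp M] by blast
    show "\<exists>A. A \<ge> 0 \<and> (\<forall>z. (z \<bullet> b) ^ 4 * cmod (I z) \<le> A)"
      using dgood_bound(1)[OF dg] b unfolding I_def
      by (intro exI[of _ "2 * integral\<^sup>L lborel (\<lambda>\<xi>. \<bar>G 4 \<xi>\<bar>)"]) auto
  qed
  then obtain Af where Af: "\<And>b. b \<in> (Basis::(real^3) set) \<Longrightarrow> Af b \<ge> 0 \<and> (\<forall>z. (z \<bullet> b) ^ 4 * cmod (I z) \<le> Af b)"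
    by metis
  define A where "A = A0 + sum Af Basis"
  have sAf: "sum Af Basis \<ge> 0" using Af by (simp add: sum_nonneg)
  have Afle: "Af b \<le> sum Af Basis" if "b \<in> Basis" for b
    using that Af by (intro member_le_sum) auto
  have cK: "cmod (LP_kernel \<phi> M z) = \<kappa> * cmod (I z)" for z
    using \<kappa> by (simp add: K norm_mult)
  show "\<exists>C. \<forall>z. cmod (LP_kernel \<phi> M z) \<le> C"
    using A0 \<kappa> by (intro exI[of _ "\<kappa> * A0"]) (simp add: cK)
  show "(\<integral>\<^sup>+ z. ennreal (cmod (LP_kernel \<phi> M z)) \<partial>lborel) < \<infinity>"
  proof (rule decay_integrable[where A="\<kappa> * A"])
    show "0 \<le> \<kappa> * A" using \<kappa> A0 sAf by (simp add: A_def)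
    fix z :: "real^3"
    show "cmod (LP_kernel \<phi> M z) \<le> \<kappa> * A"
      unfolding cK A_def using A0(1)[of z] sAf \<kappa> by (intro mult_left_mono) auto
    fix b :: "real^3" assume b: "b \<in> Basis"
    have "(z \<bullet> b) ^ 4 * cmod (LP_kernel \<phi> M z) = \<kappa> * ((z \<bullet> b) ^ 4 * cmod (I z))"
      by (simp add: cK)
    also have "\<dots> \<le> \<kappa> * A"
    proof (intro mult_left_mono)
      have "(z \<bullet> b) ^ 4 * cmod (I z) \<le> Af b" using Af[OF b] by blast
      then show "(z \<bullet> b) ^ 4 * cmod (I z) \<le> A" unfolding A_def using Afle[OF b] A0(2) by linarith
    qed (use \<kappa> in simp)
    finally show "(z \<bullet> b) ^ 4 * cmod (LP_kernel \<phi> M z) \<le> \<kappa> * A" .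
  qed
  have f: "(\<lambda>(z, \<xi>). complex_of_real (psi \<phi> M \<xi>) * cis (z \<bullet> \<xi>)) \<in> borel_measurable (lborel \<Otimes>\<^sub>M lborel)"
  proof -
    have "continuous_on UNIV (\<lambda>p::((real^3) \<times> (real^3)). complex_of_real (psi \<phi> M (snd p)) * cis (fst p \<bullet> snd p))"
      by (intro continuous_intros continuous_on_compose2[OF pc]) auto
    then have "(\<lambda>p::((real^3) \<times> (real^3)). complex_of_real (psi \<phi> M (snd p)) * cis (fst p \<bullet> snd p)) \<in> borel_measurable borel"
      by (rule borel_measurable_continuous_onI)
    then show ?thesis by (simp add: lborel_prod case_prod_beta')
  qed
  have "I \<in> borel_measurable lborel"
    unfolding I_def using lborel.borel_measurable_lebesgue_integral[OF f] by simp
  then show "LP_kernel \<phi> M \<in> borel_measurable borel"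
    unfolding K[abs_def] by simp
qed

lemma nn_reflect:
  fixes h :: "real^3 \<Rightarrow> ennreal"
  assumes [measurable]: "h \<in> borel_measurable borel"
  shows "(\<integral>\<^sup>+ y. h (x - y) \<partial>lborel) = (\<integral>\<^sup>+ y. h y \<partial>lborel)"
proof -
  have e: "lborel = distr lborel borel (\<lambda>z::real^3. x - z)"
    using lborel_affine[of "-1" x] by (simp add: density_1)
  have "(\<integral>\<^sup>+ y. h y \<partial>lborel) = (\<integral>\<^sup>+ y. h y \<partial>(distr lborel borel (\<lambda>z::real^3. x - z)))"
    by (subst e) (rule refl)
  also have "\<dots> = (\<integral>\<^sup>+ y. h (x - y) \<partial>lborel)"
    by (rule nn_integral_distr) auto
  finally show ?thesis by simp
qed

lemma nn_translate:
  fixes h :: "real^3 \<Rightarrow> ennreal"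
  assumes [measurable]: "h \<in> borel_measurable borel"
  shows "(\<integral>\<^sup>+ x. h (x - y) \<partial>lborel) = (\<integral>\<^sup>+ y. h y \<partial>lborel)"
proof -
  have "(\<integral>\<^sup>+ y. h y \<partial>lborel) = (\<integral>\<^sup>+ y. h y \<partial>(distr lborel borel ((+) (-y))))"
    by (simp add: lborel_distr_plus)
  also have "\<dots> = (\<integral>\<^sup>+ x. h (- y + x) \<partial>lborel)"
    by (rule nn_integral_distr) auto
  finally show ?thesis by simp
qed

definition SQ :: "ennreal \<Rightarrow> ennreal" where
  "SQ I = (if I = \<infinity> then \<infinity> else ennreal (sqrt (enn2real I)))"

lemma SQ_sq: "(SQ I) ^ 2 = I"
  by (cases I) (auto simp: SQ_def ennreal_power)

lemma SQ_of_sq: "SQ (x ^ 2) = x"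
proof (cases x)
  case (real r)
  then show ?thesis by (auto simp: SQ_def ennreal_power)
qed (simp add: SQ_def)

lemma SQ_mono: "I \<le> J \<Longrightarrow> SQ I \<le> SQ J"
  by (cases I; cases J) (auto simp: SQ_def top_unique)

lemma SQ_ennreal: "0 \<le> r \<Longrightarrow> SQ (ennreal r) = ennreal (sqrt r)"
  by (simp add: SQ_def)

lemma mink:
  fixes f g h :: "'a \<Rightarrow> ennreal"
  assumes [measurable]: "f \<in> borel_measurable M" "g \<in> borel_measurable M" "h \<in> borel_measurable M"
    and le: "AE x in M. f x \<le> g x + h x"
  shows "SQ (\<integral>\<^sup>+ x. f x ^ 2 \<partial>M) \<le> SQ (\<integral>\<^sup>+ x. g x ^ 2 \<partial>M) + SQ (\<integral>\<^sup>+ x. h x ^ 2 \<partial>M)"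
proof -
  define p where "p = SQ (\<integral>\<^sup>+ x. g x ^ 2 \<partial>M)"
  define q where "q = SQ (\<integral>\<^sup>+ x. h x ^ 2 \<partial>M)"
  have cs: "(\<integral>\<^sup>+ x. g x * h x \<partial>M) \<le> p * q"
  proof -
    have "(\<integral>\<^sup>+ x. g x * h x \<partial>M) ^ 2 \<le> p ^ 2 * q ^ 2"
      unfolding p_def q_def SQ_sq by (rule Cauchy_Schwarz_nn_integral) auto
    then have "SQ ((\<integral>\<^sup>+ x. g x * h x \<partial>M) ^ 2) \<le> SQ ((p * q) ^ 2)"
      by (intro SQ_mono) (simp add: power_mult_distrib)
    then show ?thesis by (simp add: SQ_of_sq)
  qed
  have "(\<integral>\<^sup>+ x. f x ^ 2 \<partial>M) \<le> (\<integral>\<^sup>+ x. (g x + h x) ^ 2 \<partial>M)"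
    using le by (intro nn_integral_mono_AE) (auto elim: eventually_mono intro: power_mono_ennreal)
  also have "\<dots> = (\<integral>\<^sup>+ x. g x ^ 2 + h x ^ 2 + 2 * g x * h x \<partial>M)"
    by (intro nn_integral_cong) (rule power2_sum)
  also have "\<dots> = (\<integral>\<^sup>+ x. g x ^ 2 \<partial>M) + (\<integral>\<^sup>+ x. h x ^ 2 \<partial>M) + 2 * (\<integral>\<^sup>+ x. g x * h x \<partial>M)"
    by (simp add: nn_integral_add nn_integral_cmult mult.assoc)
  also have "\<dots> \<le> p ^ 2 + q ^ 2 + 2 * (p * q)"
    unfolding p_def q_def SQ_sq using cs[unfolded p_def q_def]
    by (intro add_mono mult_left_mono) auto
  also have "\<dots> = (p + q) ^ 2" by (simp add: power2_sum mult.assoc)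
  finally have "SQ (\<integral>\<^sup>+ x. f x ^ 2 \<partial>M) \<le> SQ ((p + q) ^ 2)" by (rule SQ_mono)
  then show ?thesis by (simp add: SQ_of_sq p_def q_def)
qed

lemma sq_int_iff:
  "sq_int f \<longleftrightarrow> f \<in> borel_measurable lborel \<and> (\<integral>\<^sup>+ x. ennreal (cmod (f x)) ^ 2 \<partial>lborel) < \<infinity>"
proof -
  have e: "(\<integral>\<^sup>+ x. ennreal (norm ((cmod (f x))\<^sup>2)) \<partial>lborel) = (\<integral>\<^sup>+ x. ennreal (cmod (f x)) ^ 2 \<partial>lborel)"
    by (intro nn_integral_cong) (simp add: ennreal_power)
  show ?thesis
  proof
    assume "sq_int f"
    then show "f \<in> borel_measurable lborel \<and> (\<integral>\<^sup>+ x. ennreal (cmod (f x)) ^ 2 \<partial>lborel) < \<infinity>"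
      unfolding sq_int_def integrable_iff_bounded e by auto
  next
    assume a: "f \<in> borel_measurable lborel \<and> (\<integral>\<^sup>+ x. ennreal (cmod (f x)) ^ 2 \<partial>lborel) < \<infinity>"
    then have [measurable]: "f \<in> borel_measurable lborel" by auto
    show "sq_int f"
      unfolding sq_int_def integrable_iff_bounded e using a by auto
  qed
qed

lemma sq_int_zero: "sq_int (\<lambda>y. 0)"
  unfolding sq_int_iff by simp

lemma sq_int_lin:
  assumes "sq_int a" "sq_int b"
  shows "sq_int (\<lambda>y. c * a y + b y)"
proof -
  have [measurable]: "a \<in> borel_measurable lborel" "b \<in> borel_measurable lborel"
    and fa: "(\<integral>\<^sup>+ x. ennreal (cmod (a x)) ^ 2 \<partial>lborel) < \<infinity>"
    and fb: "(\<integral>\<^sup>+ x. ennreal (cmod (b x)) ^ 2 \<partial>lborel) < \<infinity>"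
    using assms unfolding sq_int_iff by auto
  have pt: "ennreal (cmod (c * a y + b y)) ^ 2 \<le>
      ennreal (2 * (cmod c)\<^sup>2) * ennreal (cmod (a y)) ^ 2 + 2 * ennreal (cmod (b y)) ^ 2" for y
  proof -
    have "cmod (c * a y + b y) \<le> cmod c * cmod (a y) + cmod (b y)"
      using norm_triangle_ineq[of "c * a y" "b y"] by (simp add: norm_mult)
    then have "(cmod (c * a y + b y))\<^sup>2 \<le> (cmod c * cmod (a y) + cmod (b y))\<^sup>2"
      by (intro power_mono) auto
    also have "\<dots> \<le> 2 * (cmod c)\<^sup>2 * (cmod (a y))\<^sup>2 + 2 * (cmod (b y))\<^sup>2"
    proof -
      define u where "u = cmod c * cmod (a y)"
      define v where "v = cmod (b y)"
      have "(u + v)\<^sup>2 + (u - v)\<^sup>2 = 2 * u\<^sup>2 + 2 * v\<^sup>2" by (simp add: power2_eq_square algebra_simps)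
      moreover have "0 \<le> (u - v)\<^sup>2" by simp
      moreover have "u\<^sup>2 = (cmod c)\<^sup>2 * (cmod (a y))\<^sup>2" unfolding u_def by (simp add: power_mult_distrib)
      ultimately show ?thesis unfolding u_def[symmetric] v_def[symmetric] by linarith
    qed
    finally have r: "(cmod (c * a y + b y))\<^sup>2 \<le> 2 * (cmod c)\<^sup>2 * (cmod (a y))\<^sup>2 + 2 * (cmod (b y))\<^sup>2" .
    have "ennreal (cmod (c * a y + b y)) ^ 2 = ennreal ((cmod (c * a y + b y))\<^sup>2)"
      by (simp add: ennreal_power)
    also have "\<dots> \<le> ennreal (2 * (cmod c)\<^sup>2 * (cmod (a y))\<^sup>2 + 2 * (cmod (b y))\<^sup>2)"
      using r by (rule ennreal_leI)
    also have "\<dots> = ennreal (2 * (cmod c)\<^sup>2) * ennreal (cmod (a y)) ^ 2 + 2 * ennreal (cmod (b y)) ^ 2"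
    proof -
      have e1: "ennreal (2 * (cmod c)\<^sup>2 * (cmod (a y))\<^sup>2) = ennreal (2 * (cmod c)\<^sup>2) * ennreal (cmod (a y)) ^ 2"
        by (simp add: ennreal_mult'' ennreal_power)
      have e2: "ennreal (2 * (cmod (b y))\<^sup>2) = 2 * ennreal (cmod (b y)) ^ 2"
        by (simp add: ennreal_mult'' ennreal_power)
      show ?thesis by (subst ennreal_plus) (simp_all only: e1 e2, simp_all)
    qed
    finally show ?thesis .
  qed
  have "(\<integral>\<^sup>+ y. ennreal (cmod (c * a y + b y)) ^ 2 \<partial>lborel) \<le>
      (\<integral>\<^sup>+ y. ennreal (2 * (cmod c)\<^sup>2) * ennreal (cmod (a y)) ^ 2 + 2 * ennreal (cmod (b y)) ^ 2 \<partial>lborel)"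
    by (intro nn_integral_mono pt)
  also have "\<dots> = ennreal (2 * (cmod c)\<^sup>2) * (\<integral>\<^sup>+ y. ennreal (cmod (a y)) ^ 2 \<partial>lborel) +
      2 * (\<integral>\<^sup>+ y. ennreal (cmod (b y)) ^ 2 \<partial>lborel)"
    by (simp add: nn_integral_add nn_integral_cmult)
  also have "\<dots> < \<infinity>"
    using fa fb by (simp add: ennreal_mult_less_top ennreal_add_less_top ennreal_mult_eq_top_iff less_top)
  finally show ?thesis unfolding sq_int_iff by simp
qed

lemma sq_int_add: "sq_int a \<Longrightarrow> sq_int b \<Longrightarrow> sq_int (\<lambda>y. a y + b y)"
  using sq_int_lin[of a b 1] by simp

lemma sq_int_diff: "sq_int a \<Longrightarrow> sq_int b \<Longrightarrow> sq_int (\<lambda>y. a y - b y)"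
proof -
  assume a: "sq_int a" and b: "sq_int b"
  have "sq_int (\<lambda>y. (-1) * b y + a y)" by (rule sq_int_lin[OF b a])
  then show ?thesis by simp
qed

lemma L2x_SQ:
  assumes "sq_int p"
  shows "ennreal (L2x p) = SQ (\<integral>\<^sup>+ x. ennreal (cmod (p x)) ^ 2 \<partial>lborel)"
proof -
  have i: "integrable lborel (\<lambda>x. (cmod (p x))\<^sup>2)" using assms unfolding sq_int_def by auto
  have "(\<integral>\<^sup>+ x. ennreal (cmod (p x)) ^ 2 \<partial>lborel) = (\<integral>\<^sup>+ x. ennreal ((cmod (p x))\<^sup>2) \<partial>lborel)"
    by (intro nn_integral_cong) (simp add: ennreal_power)
  also have "\<dots> = ennreal (LINT x|lborel. (cmod (p x))\<^sup>2)"
    by (rule nn_integral_eq_integral[OF i]) auto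
  finally show ?thesis unfolding L2x_def by (simp add: SQ_ennreal)
qed

lemma L2x_nonneg: "L2x p \<ge> 0"
  unfolding L2x_def by simp

lemma L2x_tri:
  assumes p: "sq_int p" and q: "sq_int q"
  shows "L2x (\<lambda>x. p x + q x) \<le> L2x p + L2x q"
proof -
  have [measurable]: "p \<in> borel_measurable lborel" "q \<in> borel_measurable lborel"
    using p q unfolding sq_int_iff by auto
  have "ennreal (L2x (\<lambda>x. p x + q x)) \<le> ennreal (L2x p) + ennreal (L2x q)"
    unfolding L2x_SQ[OF p] L2x_SQ[OF q] L2x_SQ[OF sq_int_add[OF p q]]
    by (rule mink) (auto intro!: ennreal_leI norm_triangle_ineq simp flip: ennreal_plus)
  also have "\<dots> = ennreal (L2x p + L2x q)" by (simp add: L2x_nonneg)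
  finally have "ennreal (L2x (\<lambda>x. p x + q x)) \<le> ennreal (L2x p + L2x q)" .
  then show ?thesis using ennreal_le_iff[of "L2x p + L2x q" "L2x (\<lambda>x. p x + q x)"]
    by (simp add: add_nonneg_nonneg L2x_nonneg)
qed

lemma L2x_neg: "L2x (\<lambda>x. - p x) = L2x p"
  unfolding L2x_def by simp

lemma ab_le_sq: "0 \<le> a \<Longrightarrow> 0 \<le> (b::real) \<Longrightarrow> ennreal (a * b) \<le> ennreal a ^ 2 + ennreal b ^ 2"
proof -
  assume a: "0 \<le> a" and b: "0 \<le> b"
  have "2 * a * b \<le> a\<^sup>2 + b\<^sup>2" by (rule sum_squares_bound)
  then have "a * b \<le> a\<^sup>2 + b\<^sup>2" using mult_nonneg_nonneg[OF a b] by linarith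
  then have "ennreal (a * b) \<le> ennreal (a\<^sup>2 + b\<^sup>2)" by (rule ennreal_leI)
  also have "\<dots> = ennreal a ^ 2 + ennreal b ^ 2" by (simp add: ennreal_plus ennreal_power a b)
  finally show ?thesis .
qed

context
  fixes K :: "real^3 \<Rightarrow> complex" and C :: real
  assumes Km[measurable]: "K \<in> borel_measurable borel" and Kb: "\<And>z. cmod (K z) \<le> C"
    and Ki: "(\<integral>\<^sup>+ z. ennreal (cmod (K z)) \<partial>lborel) < \<infinity>"
begin

lemma C_nonneg: "C \<ge> 0" using Kb[of 0] norm_ge_zero order_trans by blast

lemma K2fin: "(\<integral>\<^sup>+ z. ennreal (cmod (K z)) ^ 2 \<partial>lborel) < \<infinity>"
proof -
  have "(\<integral>\<^sup>+ z. ennreal (cmod (K z)) ^ 2 \<partial>lborel) \<le> (\<integral>\<^sup>+ z. ennreal C * ennreal (cmod (K z)) \<partial>lborel)"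
  proof (intro nn_integral_mono)
    fix z
    have "cmod (K z) * cmod (K z) \<le> C * cmod (K z)" using Kb[of z] by (intro mult_right_mono) auto
    then have "ennreal (cmod (K z) * cmod (K z)) \<le> ennreal (C * cmod (K z))" by (rule ennreal_leI)
    then show "ennreal (cmod (K z)) ^ 2 \<le> ennreal C * ennreal (cmod (K z))"
      by (simp add: power2_eq_square ennreal_mult'' ennreal_mult C_nonneg)
  qed
  also have "\<dots> = ennreal C * (\<integral>\<^sup>+ z. ennreal (cmod (K z)) \<partial>lborel)"
    by (simp add: nn_integral_cmult)
  also have "\<dots> < \<infinity>" using Ki by (simp add: ennreal_mult_less_top less_top)
  finally show ?thesis .
qed

lemma conv_int:
  assumes f: "sq_int f"
  shows "integrable lborel (\<lambda>y. K (x - y) * f y)"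
proof -
  have [measurable]: "f \<in> borel_measurable lborel"
    and ff: "(\<integral>\<^sup>+ y. ennreal (cmod (f y)) ^ 2 \<partial>lborel) < \<infinity>"
    using f unfolding sq_int_iff by auto
  have "(\<integral>\<^sup>+ y. ennreal (norm (K (x - y) * f y)) \<partial>lborel)
      \<le> (\<integral>\<^sup>+ y. ennreal (cmod (K (x - y))) ^ 2 + ennreal (cmod (f y)) ^ 2 \<partial>lborel)"
    by (intro nn_integral_mono) (simp add: norm_mult ab_le_sq)
  also have "\<dots> = (\<integral>\<^sup>+ y. ennreal (cmod (K (x - y))) ^ 2 \<partial>lborel) + (\<integral>\<^sup>+ y. ennreal (cmod (f y)) ^ 2 \<partial>lborel)"
    by (rule nn_integral_add) auto
  also have "(\<integral>\<^sup>+ y. ennreal (cmod (K (x - y))) ^ 2 \<partial>lborel) = (\<integral>\<^sup>+ y. ennreal (cmod (K y)) ^ 2 \<partial>lborel)"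
    by (rule nn_reflect[of "\<lambda>y. ennreal (cmod (K y)) ^ 2"]) auto
  also have "\<dots> + (\<integral>\<^sup>+ y. ennreal (cmod (f y)) ^ 2 \<partial>lborel) < \<infinity>"
    using K2fin ff by (simp add: ennreal_add_less_top less_top)
  finally show ?thesis unfolding integrable_iff_bounded by auto
qed

lemma conv_meas:
  assumes [measurable]: "f \<in> borel_measurable lborel"
  shows "(\<lambda>x. LINT y|lborel. K (x - y) * f y) \<in> borel_measurable lborel"
proof -
  have "(\<lambda>(x, y). K (x - y) * f y) \<in> borel_measurable (lborel \<Otimes>\<^sub>M lborel)"
    by measurable
  then show ?thesis by (rule lborel.borel_measurable_lebesgue_integral[where f="\<lambda>x y. K (x - y) * f y"])
qed

lemma conv_diff:
  assumes "sq_int f" "sq_int g"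
  shows "(LINT y|lborel. K (x - y) * (f y - g y)) = (LINT y|lborel. K (x - y) * f y) - (LINT y|lborel. K (x - y) * g y)"
  using conv_int[OF assms(1)] conv_int[OF assms(2)] by (simp add: right_diff_distrib integral_diff)

lemma young:
  assumes f: "sq_int f"
  shows "sq_int (\<lambda>x. LINT y|lborel. K (x - y) * f y)"
proof -
  have [measurable]: "f \<in> borel_measurable lborel"
    and ff: "(\<integral>\<^sup>+ y. ennreal (cmod (f y)) ^ 2 \<partial>lborel) < \<infinity>"
    using f unfolding sq_int_iff by auto
  define A where "A = (\<integral>\<^sup>+ z. ennreal (cmod (K z)) \<partial>lborel)"
  have Ax: "(\<integral>\<^sup>+ y. ennreal (cmod (K (x - y))) \<partial>lborel) = A" for x
    unfolding A_def by (rule nn_reflect[of "\<lambda>y. ennreal (cmod (K y))"]) auto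
  have Ay: "(\<integral>\<^sup>+ x. ennreal (cmod (K (x - y))) \<partial>lborel) = A" for y
    unfolding A_def by (rule nn_translate[of "\<lambda>y. ennreal (cmod (K y))"]) auto
  have pt: "ennreal (cmod (LINT y|lborel. K (x - y) * f y)) ^ 2
      \<le> A * (\<integral>\<^sup>+ y. ennreal (cmod (K (x - y))) * ennreal (cmod (f y)) ^ 2 \<partial>lborel)" for x
  proof -
    have "ennreal (cmod (LINT y|lborel. K (x - y) * f y)) \<le> (\<integral>\<^sup>+ y. ennreal (norm (K (x - y) * f y)) \<partial>lborel)"
      by (rule integral_norm_bound_ennreal[OF conv_int[OF f]])
    also have "\<dots> = (\<integral>\<^sup>+ y. ennreal (sqrt (cmod (K (x - y)))) * ennreal (sqrt (cmod (K (x - y))) * cmod (f y)) \<partial>lborel)"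
      by (intro nn_integral_cong)
         (simp add: norm_mult ennreal_mult''[symmetric] real_sqrt_mult[symmetric] mult.assoc[symmetric])
    finally have "ennreal (cmod (LINT y|lborel. K (x - y) * f y)) ^ 2 \<le>
        (\<integral>\<^sup>+ y. ennreal (sqrt (cmod (K (x - y)))) * ennreal (sqrt (cmod (K (x - y))) * cmod (f y)) \<partial>lborel) ^ 2"
      by (rule power_mono_ennreal)
    also have "\<dots> \<le> (\<integral>\<^sup>+ y. ennreal (sqrt (cmod (K (x - y)))) ^ 2 \<partial>lborel) *
        (\<integral>\<^sup>+ y. ennreal (sqrt (cmod (K (x - y))) * cmod (f y)) ^ 2 \<partial>lborel)"
      by (rule Cauchy_Schwarz_nn_integral) auto
    also have "(\<integral>\<^sup>+ y. ennreal (sqrt (cmod (K (x - y)))) ^ 2 \<partial>lborel) = A"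
      unfolding Ax[of x, symmetric] by (intro nn_integral_cong) (simp add: ennreal_power)
    also have "(\<integral>\<^sup>+ y. ennreal (sqrt (cmod (K (x - y))) * cmod (f y)) ^ 2 \<partial>lborel)
        = (\<integral>\<^sup>+ y. ennreal (cmod (K (x - y))) * ennreal (cmod (f y)) ^ 2 \<partial>lborel)"
      by (intro nn_integral_cong) (simp add: ennreal_power power_mult_distrib ennreal_mult''[symmetric])
    finally show ?thesis .
  qed
  have "(\<integral>\<^sup>+ x. ennreal (cmod (LINT y|lborel. K (x - y) * f y)) ^ 2 \<partial>lborel)
      \<le> (\<integral>\<^sup>+ x. A * (\<integral>\<^sup>+ y. ennreal (cmod (K (x - y))) * ennreal (cmod (f y)) ^ 2 \<partial>lborel) \<partial>lborel)"
    by (intro nn_integral_mono pt)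
  also have "\<dots> = A * (\<integral>\<^sup>+ x. (\<integral>\<^sup>+ y. ennreal (cmod (K (x - y))) * ennreal (cmod (f y)) ^ 2 \<partial>lborel) \<partial>lborel)"
    by (rule nn_integral_cmult) measurable
  also have "(\<integral>\<^sup>+ x. (\<integral>\<^sup>+ y. ennreal (cmod (K (x - y))) * ennreal (cmod (f y)) ^ 2 \<partial>lborel) \<partial>lborel)
      = (\<integral>\<^sup>+ y. (\<integral>\<^sup>+ x. ennreal (cmod (K (x - y))) * ennreal (cmod (f y)) ^ 2 \<partial>lborel) \<partial>lborel)"
    by (rule lborel_pair.Fubini'[symmetric]) measurable
  also have "\<dots> = (\<integral>\<^sup>+ y. A * ennreal (cmod (f y)) ^ 2 \<partial>lborel)"
    by (intro nn_integral_cong) (simp add: nn_integral_multc Ay)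
  also have "\<dots> = A * (\<integral>\<^sup>+ y. ennreal (cmod (f y)) ^ 2 \<partial>lborel)"
    by (rule nn_integral_cmult) measurable
  also have "A * (A * (\<integral>\<^sup>+ y. ennreal (cmod (f y)) ^ 2 \<partial>lborel)) < \<infinity>"
    using Ki ff unfolding A_def by (simp add: ennreal_mult_less_top less_top)
  finally show ?thesis unfolding sq_int_iff using conv_meas by auto
qed

end

lemma Linfx_meas:
  fixes F :: "real \<Rightarrow> real^3 \<Rightarrow> complex" and N :: "real measure"
  assumes Fm: "(\<lambda>(t, x). F t x) \<in> borel_measurable (N \<Otimes>\<^sub>M lborel)"
  shows "(\<lambda>t. Linfx (F t)) \<in> borel_measurable N"
proof -
  define g where "g t x = ereal (cmod (F t x))" for t x
  have gm: "(\<lambda>p. g (fst p) (snd p)) \<in> borel_measurable (N \<Otimes>\<^sub>M lborel)"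
  proof -
    have "(\<lambda>p. F (fst p) (snd p)) \<in> borel_measurable (N \<Otimes>\<^sub>M lborel)"
      using Fm by (simp add: case_prod_beta')
    then show ?thesis unfolding g_def by measurable
  qed
  have sec: "g t \<in> borel_measurable lborel" if "t \<in> space N" for t
    using measurable_Pair2[OF gm that] by simp
  have key: "esssup lborel (g t) \<le> z \<longleftrightarrow> emeasure lborel {x. z < g t x} = 0" if t: "t \<in> space N" for t z
  proof
    assume "esssup lborel (g t) \<le> z"
    then have "{x. z < g t x} \<subseteq> {x \<in> space lborel. esssup lborel (g t) < g t x}"
      by auto
    then have "emeasure lborel {x. z < g t x} \<le> emeasure lborel {x \<in> space lborel. esssup lborel (g t) < g t x}"
      by (rule emeasure_mono) (use sec[OF t] in measurable)
    then show "emeasure lborel {x. z < g t x} = 0" using esssup_zero_measure[of lborel "g t"] by simp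
  next
    assume a: "emeasure lborel {x. z < g t x} = 0"
    have "{x. z < g t x} \<in> sets lborel" using sec[OF t] by measurable
    then have "{x. z < g t x} \<in> null_sets lborel" using a by auto
    then have "AE x in lborel. x \<notin> {x. z < g t x}" by (rule AE_not_in)
    then have "AE x in lborel. g t x \<le> z" by (auto simp: not_less)
    then show "esssup lborel (g t) \<le> z" using esssup_I[OF sec[OF t]] by blast
  qed
  have "(\<lambda>t. esssup lborel (g t)) \<in> borel_measurable N"
  proof (rule borel_measurableI_le)
    fix z
    define Q where "Q = {p \<in> space (N \<Otimes>\<^sub>M lborel). z < g (fst p) (snd p)}"
    have Q: "Q \<in> sets (N \<Otimes>\<^sub>M lborel)" unfolding Q_def using gm by measurable
    have h: "(\<lambda>t. emeasure lborel (Pair t -` Q)) \<in> borel_measurable N"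
      by (rule lborel.measurable_emeasure_Pair[OF Q])
    have pre: "Pair t -` Q = {x. z < g t x}" if "t \<in> space N" for t
      using that by (auto simp: Q_def space_pair_measure)
    have "{t \<in> space N. esssup lborel (g t) \<le> z} = (\<lambda>t. emeasure lborel (Pair t -` Q)) -` {0} \<inter> space N"
      using key pre by auto
    also have "\<dots> \<in> sets N" by (rule measurable_sets[OF h]) simp
    finally show "{t \<in> space N. esssup lborel (g t) \<le> z} \<in> sets N" .
  qed
  then show ?thesis unfolding Linfx_def g_def[symmetric]
    by (rule measurable_compose[OF _ measurable_e2ennreal])
qed

lemma Linfx_fin_iff:
  assumes fm: "f \<in> borel_measurable lborel"
  shows "Linfx f < \<infinity> \<longleftrightarrow> (\<exists>B. AE x in lborel. cmod (f x) \<le> B)"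
proof
  have gm: "(\<lambda>x. ereal (cmod (f x))) \<in> borel_measurable lborel" using fm by measurable
  assume "Linfx f < \<infinity>"
  then have ne: "esssup lborel (\<lambda>x. ereal (cmod (f x))) \<noteq> \<infinity>"
    unfolding Linfx_def by auto
  define B where "B = max 0 (real_of_ereal (esssup lborel (\<lambda>x. ereal (cmod (f x)))))"
  have le: "esssup lborel (\<lambda>x. ereal (cmod (f x))) \<le> ereal B"
    using ne unfolding B_def by (cases "esssup lborel (\<lambda>x. ereal (cmod (f x)))") auto
  have "AE x in lborel. cmod (f x) \<le> B"
    using esssup_AE[of "\<lambda>x. ereal (cmod (f x))" lborel]
  proof (rule eventually_mono)
    fix x assume "ereal (cmod (f x)) \<le> esssup lborel (\<lambda>x. ereal (cmod (f x)))"
    then have "ereal (cmod (f x)) \<le> ereal B" using le by (rule order_trans)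
    then show "cmod (f x) \<le> B" by simp
  qed
  then show "\<exists>B. AE x in lborel. cmod (f x) \<le> B" by auto
next
  assume "\<exists>B. AE x in lborel. cmod (f x) \<le> B"
  then obtain B where B: "AE x in lborel. cmod (f x) \<le> B" by blast
  have gm: "(\<lambda>x. ereal (cmod (f x))) \<in> borel_measurable lborel" using fm by measurable
  have "esssup lborel (\<lambda>x. ereal (cmod (f x))) \<le> ereal B"
    using B by (intro esssup_I[OF gm]) auto
  then have "Linfx f \<le> e2ennreal (ereal B)" unfolding Linfx_def by (rule e2ennreal_mono)
  then show "Linfx f < \<infinity>" by (simp add: le_less_trans)
qed

lemma e2_add: "0 \<le> a \<Longrightarrow> 0 \<le> b \<Longrightarrow> e2ennreal (a + b) = e2ennreal a + e2ennreal b"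
  by (cases a; cases b) (auto simp: ennreal_plus)

lemma esssup_nonneg:
  assumes "\<And>x. 0 \<le> g x"
  shows "0 \<le> esssup lborel (g :: real^3 \<Rightarrow> ereal)"
proof (rule ccontr)
  assume "\<not> 0 \<le> esssup lborel g"
  then have lt: "esssup lborel g < 0" by (simp add: not_le)
  have "AE x in (lborel :: (real^3) measure). False"
    using esssup_AE[of g lborel]
  proof (rule eventually_mono)
    fix x assume "g x \<le> esssup lborel g"
    then show False using lt assms[of x] by simp
  qed
  then have "ae_filter (lborel :: (real^3) measure) = bot" using trivial_limit_def by blast
  then show False unfolding ae_filter_eq_bot_iff by simp
qed

lemma Linfx_add:
  assumes [measurable]: "p \<in> borel_measurable lborel" "q \<in> borel_measurable lborel"
  shows "Linfx (\<lambda>x. p x + q x) \<le> Linfx p + Linfx q"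
proof -
  have "esssup lborel (\<lambda>x. ereal (cmod (p x + q x))) \<le> esssup lborel (\<lambda>x. ereal (cmod (p x)) + ereal (cmod (q x)))"
    by (rule esssup_mono) (auto intro: norm_triangle_ineq)
  also have "\<dots> \<le> esssup lborel (\<lambda>x. ereal (cmod (p x))) + esssup lborel (\<lambda>x. ereal (cmod (q x)))"
    by (rule esssup_add)
  finally have "Linfx (\<lambda>x. p x + q x) \<le> e2ennreal (esssup lborel (\<lambda>x. ereal (cmod (p x))) + esssup lborel (\<lambda>x. ereal (cmod (q x))))"
    unfolding Linfx_def by (rule e2ennreal_mono)
  also have "\<dots> = Linfx p + Linfx q"
    unfolding Linfx_def by (rule e2_add) (auto intro: esssup_nonneg)
  finally show ?thesis .
qed

lemma Linfx_neg: "Linfx (\<lambda>x. - p x) = Linfx p"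
  unfolding Linfx_def by simp

context
  fixes K :: "real^3 \<Rightarrow> complex" and C :: real
  assumes Km[measurable]: "K \<in> borel_measurable borel" and Kb: "\<And>z. cmod (K z) \<le> C"
    and Ki: "(\<integral>\<^sup>+ z. ennreal (cmod (K z)) \<partial>lborel) < \<infinity>"
begin

lemma conv_int_bdd:
  assumes fm[measurable]: "f \<in> borel_measurable lborel" and fb: "AE y in lborel. cmod (f y) \<le> B"
  shows "integrable lborel (\<lambda>y. K (x - y) * f y)"
proof -
  have "(\<integral>\<^sup>+ y. ennreal (norm (K (x - y))) \<partial>lborel) = (\<integral>\<^sup>+ y. ennreal (cmod (K y)) \<partial>lborel)"
    by (rule nn_reflect[of "\<lambda>y. ennreal (cmod (K y))"]) auto
  then have "integrable lborel (\<lambda>y. K (x - y))"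
    unfolding integrable_iff_bounded using Ki by auto
  then have i: "integrable lborel (\<lambda>y. B * cmod (K (x - y)))" by auto
  show ?thesis
  proof (rule Bochner_Integration.integrable_bound[OF i])
    show "AE y in lborel. norm (K (x - y) * f y) \<le> norm (B * cmod (K (x - y)))"
      using fb
    proof (rule eventually_mono)
      fix y assume "cmod (f y) \<le> B"
      then have "cmod (K (x - y)) * cmod (f y) \<le> cmod (K (x - y)) * B"
        by (intro mult_left_mono) auto
      then show "norm (K (x - y) * f y) \<le> norm (B * cmod (K (x - y)))"
        by (simp add: norm_mult mult.commute)
    qed
  qed measurable
qed

lemma conv_meas2:
  fixes u :: "real \<Rightarrow> real^3 \<Rightarrow> complex" and N :: "real measure"
  assumes "(\<lambda>(t, y). u t y) \<in> borel_measurable (N \<Otimes>\<^sub>M lborel)"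
  shows "(\<lambda>(t, x). LINT y|lborel. K (x - y) * u t y) \<in> borel_measurable (N \<Otimes>\<^sub>M lborel)"
proof -
  have um[measurable]: "(\<lambda>p. u (fst p) (snd p)) \<in> borel_measurable (N \<Otimes>\<^sub>M lborel)"
    using assms by (simp add: case_prod_beta')
  have "(\<lambda>(p, y). K (snd p - y) * u (fst p) y) \<in> borel_measurable ((N \<Otimes>\<^sub>M lborel) \<Otimes>\<^sub>M lborel)"
  proof -
    have c: "(\<lambda>q. (fst (fst q), snd q)) \<in> measurable ((N \<Otimes>\<^sub>M lborel) \<Otimes>\<^sub>M lborel) (N \<Otimes>\<^sub>M lborel)"
      by measurable
    have "(\<lambda>q. (\<lambda>p. u (fst p) (snd p)) ((\<lambda>q. (fst (fst q), snd q)) q)) \<in> borel_measurable ((N \<Otimes>\<^sub>M lborel) \<Otimes>\<^sub>M lborel)"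
      by (rule measurable_compose[OF c um])
    then have [measurable]: "(\<lambda>q. u (fst (fst q)) (snd q)) \<in> borel_measurable ((N \<Otimes>\<^sub>M lborel) \<Otimes>\<^sub>M lborel)"
      by (simp only: fst_conv snd_conv)
    show ?thesis unfolding case_prod_beta' by measurable
  qed
  then have "(\<lambda>p. LINT y|lborel. K (snd p - y) * u (fst p) y) \<in> borel_measurable (N \<Otimes>\<^sub>M lborel)"
    by (rule lborel.borel_measurable_lebesgue_integral[where f="\<lambda>p y. K (snd p - y) * u (fst p) y"])
  then show ?thesis by (simp add: case_prod_beta')
qed

end

definition Kok :: "(real^3 \<Rightarrow> complex) \<Rightarrow> bool" where
  "Kok K \<longleftrightarrow> K \<in> borel_measurable borel \<and> (\<exists>C. \<forall>z. cmod (K z) \<le> C) \<and>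
     (\<integral>\<^sup>+ z. ennreal (cmod (K z)) \<partial>lborel) < \<infinity>"

definition PX :: "real \<Rightarrow> fn \<Rightarrow> bool" where
  "PX T u \<longleftrightarrow> (\<forall>t\<in>{0..T}. sq_int (u t))"

lemma LP_neg: "LP \<phi> M (\<lambda>y. - f y) = (\<lambda>x. - LP \<phi> M f x)"
  unfolding LP_def by (simp add: fun_eq_iff)

lemma PX_zero: "PX T (\<lambda>t y. 0)"
  unfolding PX_def using sq_int_zero by simp

lemma PX_lin: "PX T a \<Longrightarrow> PX T b \<Longrightarrow> PX T (\<lambda>t y. c * a t y + b t y)"
  unfolding PX_def using sq_int_lin by blast

lemma L2x_LP_tri:
  assumes K: "Kok (LP_kernel \<phi> M)" and a: "sq_int a" and b: "sq_int b"
  shows "L2x (LP \<phi> M a) \<le> L2x (LP \<phi> M b) + L2x (LP \<phi> M (\<lambda>y. a y - b y))"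
proof -
  obtain C where Km: "LP_kernel \<phi> M \<in> borel_measurable borel" and Kb: "\<And>z. cmod (LP_kernel \<phi> M z) \<le> C"
    and Ki: "(\<integral>\<^sup>+ z. ennreal (cmod (LP_kernel \<phi> M z)) \<partial>lborel) < \<infinity>"
    using K unfolding Kok_def by blast
  have d: "sq_int (\<lambda>y. a y - b y)" by (rule sq_int_diff[OF a b])
  have e: "LP \<phi> M a = (\<lambda>x. LP \<phi> M b x + LP \<phi> M (\<lambda>y. a y - b y) x)"
    unfolding LP_def using conv_diff[OF Km Kb Ki a b] by (simp add: fun_eq_iff)
  show ?thesis unfolding e
    by (rule L2x_tri) (use young[OF Km Kb Ki b] young[OF Km Kb Ki d] in \<open>simp_all add: LP_def\<close>)
qed

lemma LinfL2_tri:
  assumes K: "Kok (LP_kernel \<phi> M)" and a: "PX T a" and b: "PX T b" and \<tau>: "\<tau> \<le> T"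
  shows "LinfL2 \<tau> (\<lambda>t. LP \<phi> M (a t)) \<le> LinfL2 \<tau> (\<lambda>t. LP \<phi> M (b t)) + LinfL2 T (\<lambda>t. LP \<phi> M (\<lambda>y. a t y - b t y))"
  unfolding LinfL2_def
proof (rule SUP_least)
  fix t assume t: "t \<in> {0..\<tau>}"
  then have tT: "t \<in> {0..T}" using \<tau> by auto
  have "L2x (LP \<phi> M (a t)) \<le> L2x (LP \<phi> M (b t)) + L2x (LP \<phi> M (\<lambda>y. a t y - b t y))"
    by (rule L2x_LP_tri[OF K]) (use a b tT in \<open>auto simp: PX_def\<close>)
  then have "ennreal (L2x (LP \<phi> M (a t))) \<le> ennreal (L2x (LP \<phi> M (b t))) + ennreal (L2x (LP \<phi> M (\<lambda>y. a t y - b t y)))"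
    by (simp add: ennreal_plus[symmetric] L2x_nonneg ennreal_leI del: ennreal_plus)
  also have "\<dots> \<le> (SUP t\<in>{0..\<tau>}. ennreal (L2x (LP \<phi> M (b t)))) + (SUP t\<in>{0..T}. ennreal (L2x (LP \<phi> M (\<lambda>y. a t y - b t y))))"
    using t tT by (intro add_mono SUP_upper)
  finally show "ennreal (L2x (LP \<phi> M (a t))) \<le> (SUP t\<in>{0..\<tau>}. ennreal (L2x (LP \<phi> M (b t)))) + (SUP t\<in>{0..T}. ennreal (L2x (LP \<phi> M (\<lambda>y. a t y - b t y))))" .
qed

lemma sum_tri:
  fixes A B D :: "nat \<Rightarrow> ennreal"
  assumes "\<And>k. A k \<le> B k + D k"
  shows "(\<Sum>k. ennreal (c k) * A k) \<le> (\<Sum>k. ennreal (c k) * B k) + (\<Sum>k. ennreal (c k) * D k)"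
proof -
  have "(\<Sum>k. ennreal (c k) * A k) \<le> (\<Sum>k. ennreal (c k) * B k + ennreal (c k) * D k)"
    using assms by (intro suminf_le) (auto simp: summableI distrib_left[symmetric] intro: mult_left_mono)
  also have "\<dots> = (\<Sum>k. ennreal (c k) * B k) + (\<Sum>k. ennreal (c k) * D k)"
    by (rule suminf_add[symmetric]) (auto simp: summableI)
  finally show ?thesis .
qed

lemma Xnorm_tri:
  assumes K: "\<And>k. Kok (LP_kernel \<phi> (2 ^ k))" and a: "PX T a" and b: "PX T b" and \<tau>: "\<tau> \<le> T"
  shows "Xnorm \<phi> c \<tau> a \<le> Xnorm \<phi> c \<tau> b + Xnorm \<phi> c T (\<lambda>t y. a t y - b t y)"
  unfolding Xnorm_def by (rule sum_tri[where c="\<lambda>k. c (2 ^ k)"]) (rule LinfL2_tri[OF K a b \<tau>])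

lemma Xnorm_neg: "Xnorm \<phi> c \<tau> (\<lambda>t y. - u t y) = Xnorm \<phi> c \<tau> u"
  unfolding Xnorm_def LinfL2_def LP_neg by (simp add: L2x_neg)

lemma Xnorm_mono: "mono (\<lambda>\<tau>. Xnorm \<phi> c \<tau> u)"
proof (rule monoI)
  fix \<tau> \<tau>' :: real assume "\<tau> \<le> \<tau>'"
  then have "LinfL2 \<tau> w \<le> LinfL2 \<tau>' w" for w
    unfolding LinfL2_def by (intro SUP_subset_mono) auto
  then show "Xnorm \<phi> c \<tau> u \<le> Xnorm \<phi> c \<tau>' u"
    unfolding Xnorm_def by (intro suminf_le mult_left_mono) (auto simp: summableI)
qed

lemma L2Linf_SQ: "L2Linf \<tau> u = SQ (\<integral>\<^sup>+ t. (indicator {0..\<tau>} t * Linfx (u t)) ^ 2 \<partial>lborel)"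
proof -
  have "(\<integral>\<^sup>+ t. indicator {0..\<tau>} t * (Linfx (u t))\<^sup>2 \<partial>lborel) = (\<integral>\<^sup>+ t. (indicator {0..\<tau>} t * Linfx (u t)) ^ 2 \<partial>lborel)"
    by (intro nn_integral_cong) (auto simp: indicator_def power2_eq_square)
  then show ?thesis unfolding L2Linf_def Let_def SQ_def by simp
qed

definition PS :: "real \<Rightarrow> fn \<Rightarrow> bool" where
  "PS T u \<longleftrightarrow> (\<lambda>(t, y). u t y) \<in> borel_measurable (restrict_space lborel {0..T} \<Otimes>\<^sub>M lborel) \<and>
     (AE t in lborel. t \<in> {0..T} \<longrightarrow> Linfx (u t) < \<infinity>)"

lemma sec_meas:
  assumes "(\<lambda>(t, y). u t y) \<in> borel_measurable (restrict_space lborel {0..T} \<Otimes>\<^sub>M lborel)" and "t \<in> {0..T}"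
  shows "u t \<in> borel_measurable lborel"
proof -
  have "t \<in> space (restrict_space lborel {0..T})" using assms(2) by (simp add: space_restrict_space)
  from measurable_Pair2[OF assms(1) this] show ?thesis by simp
qed

lemma ind_meas:
  fixes g :: "real \<Rightarrow> ennreal"
  assumes g: "g \<in> borel_measurable (restrict_space lborel {0..T})" and \<tau>: "\<tau> \<le> T"
  shows "(\<lambda>t. indicator {0..\<tau>} t * g t) \<in> borel_measurable lborel"
proof -
  have "(\<lambda>t. if t \<in> {0..T} then g t else 0) \<in> borel_measurable lborel"
    using g by (subst (asm) measurable_restrict_space_iff) auto
  then have m: "(\<lambda>t. indicator {0..\<tau>} t * (if t \<in> {0..T} then g t else 0)) \<in> borel_measurable lborel"
    by measurable
  have "(\<lambda>t. indicator {0..\<tau>} t * g t) = (\<lambda>t. indicator {0..\<tau>} t * (if t \<in> {0..T} then g t else 0))"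
    using \<tau> by (auto simp: fun_eq_iff indicator_def)
  then show ?thesis using m by simp
qed

lemma LinfLP_meas:
  fixes w :: fn and N :: "real measure"
  assumes K: "Kok (LP_kernel \<phi> M)"
    and w: "(\<lambda>(t, y). w t y) \<in> borel_measurable (N \<Otimes>\<^sub>M lborel)"
  shows "(\<lambda>t. Linfx (LP \<phi> M (w t))) \<in> borel_measurable N"
proof -
  obtain C where Km: "LP_kernel \<phi> M \<in> borel_measurable borel" and Kb: "\<And>z. cmod (LP_kernel \<phi> M z) \<le> C"
    and Ki: "(\<integral>\<^sup>+ z. ennreal (cmod (LP_kernel \<phi> M z)) \<partial>lborel) < \<infinity>"
    using K unfolding Kok_def by blast
  show ?thesis
    by (rule Linfx_meas) (use conv_meas2[OF Km Kb Ki w] in \<open>simp add: LP_def\<close>)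
qed

lemma L2Linf_tri:
  assumes K: "Kok (LP_kernel \<phi> M)" and a: "PS T a" and b: "PS T b" and \<tau>: "\<tau> \<le> T"
  shows "L2Linf \<tau> (\<lambda>t. LP \<phi> M (a t)) \<le> L2Linf \<tau> (\<lambda>t. LP \<phi> M (b t)) + L2Linf T (\<lambda>t. LP \<phi> M (\<lambda>y. a t y - b t y))"
proof -
  obtain C where Km: "LP_kernel \<phi> M \<in> borel_measurable borel" and Kb: "\<And>z. cmod (LP_kernel \<phi> M z) \<le> C"
    and Ki: "(\<integral>\<^sup>+ z. ennreal (cmod (LP_kernel \<phi> M z)) \<partial>lborel) < \<infinity>"
    using K unfolding Kok_def by blast
  let ?RT = "restrict_space lborel {0..T}"
  have am: "(\<lambda>(t, y). a t y) \<in> borel_measurable (?RT \<Otimes>\<^sub>M lborel)" and bm: "(\<lambda>(t, y). b t y) \<in> borel_measurable (?RT \<Otimes>\<^sub>M lborel)"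
    using a b unfolding PS_def by auto
  have dm: "(\<lambda>(t, y). a t y - b t y) \<in> borel_measurable (?RT \<Otimes>\<^sub>M lborel)"
  proof -
    have [measurable]: "(\<lambda>p. a (fst p) (snd p)) \<in> borel_measurable (?RT \<Otimes>\<^sub>M lborel)"
      "(\<lambda>p. b (fst p) (snd p)) \<in> borel_measurable (?RT \<Otimes>\<^sub>M lborel)"
      using am bm by (simp_all add: case_prod_beta')
    show ?thesis unfolding case_prod_beta' by measurable
  qed
  define F where "F (w::fn) (s::real) (t::real) = indicator {0..s} t * Linfx (LP \<phi> M (w t))" for w s t
  have Fm: "F w s \<in> borel_measurable lborel" if "(\<lambda>(t, y). w t y) \<in> borel_measurable (?RT \<Otimes>\<^sub>M lborel)" "s \<le> T" for w s
    unfolding F_def by (rule ind_meas[OF LinfLP_meas[OF K that(1)] that(2)])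
  have ae: "AE t in lborel. F a \<tau> t \<le> F b \<tau> t + F (\<lambda>t y. a t y - b t y) \<tau> t"
  proof -
    have "AE t in lborel. (t \<in> {0..T} \<longrightarrow> Linfx (a t) < \<infinity>) \<and> (t \<in> {0..T} \<longrightarrow> Linfx (b t) < \<infinity>)"
      using a b unfolding PS_def by auto
    then show ?thesis
    proof (rule eventually_mono)
      fix t assume h: "(t \<in> {0..T} \<longrightarrow> Linfx (a t) < \<infinity>) \<and> (t \<in> {0..T} \<longrightarrow> Linfx (b t) < \<infinity>)"
      show "F a \<tau> t \<le> F b \<tau> t + F (\<lambda>t y. a t y - b t y) \<tau> t"
      proof (cases "t \<in> {0..\<tau>}")
        case False then show ?thesis by (simp add: F_def)
      next
        case True
        then have tT: "t \<in> {0..T}" using \<tau> by auto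
        have atm: "a t \<in> borel_measurable lborel" by (rule sec_meas[OF am tT])
        have btm: "b t \<in> borel_measurable lborel" by (rule sec_meas[OF bm tT])
        obtain Ba where Ba: "AE x in lborel. cmod (a t x) \<le> Ba" using h tT Linfx_fin_iff[OF atm] by blast
        obtain Bb where Bb: "AE x in lborel. cmod (b t x) \<le> Bb" using h tT Linfx_fin_iff[OF btm] by blast
        have dtm: "(\<lambda>y. a t y - b t y) \<in> borel_measurable lborel" using atm btm by measurable
        have e: "LP \<phi> M (a t) = (\<lambda>x. LP \<phi> M (b t) x + LP \<phi> M (\<lambda>y. a t y - b t y) x)"
          unfolding LP_def using conv_int_bdd[OF Km Kb Ki atm Ba] conv_int_bdd[OF Km Kb Ki btm Bb]
          by (simp add: fun_eq_iff right_diff_distrib integral_diff)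
        have "Linfx (LP \<phi> M (a t)) \<le> Linfx (LP \<phi> M (b t)) + Linfx (LP \<phi> M (\<lambda>y. a t y - b t y))"
          unfolding e by (rule Linfx_add) (use conv_meas[OF Km Kb Ki btm] conv_meas[OF Km Kb Ki dtm] in \<open>simp_all add: LP_def\<close>)
        then show ?thesis using True by (simp add: F_def)
      qed
    qed
  qed
  have eq: "L2Linf s (\<lambda>t. LP \<phi> M (w t)) = SQ (\<integral>\<^sup>+ t. (F w s t) ^ 2 \<partial>lborel)" for w s
    unfolding L2Linf_SQ F_def by simp
  have m1: "L2Linf \<tau> (\<lambda>t. LP \<phi> M (a t)) \<le> L2Linf \<tau> (\<lambda>t. LP \<phi> M (b t)) + L2Linf \<tau> (\<lambda>t. LP \<phi> M (\<lambda>y. a t y - b t y))"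
    unfolding eq by (rule mink[OF Fm[OF am \<tau>] Fm[OF bm \<tau>] Fm[OF dm \<tau>] ae])
  have m2: "L2Linf \<tau> (\<lambda>t. LP \<phi> M (\<lambda>y. a t y - b t y)) \<le> L2Linf T (\<lambda>t. LP \<phi> M (\<lambda>y. a t y - b t y))"
    unfolding eq
  proof (intro SQ_mono nn_integral_mono power_mono_ennreal)
    fix t
    show "F (\<lambda>t y. a t y - b t y) \<tau> t \<le> F (\<lambda>t y. a t y - b t y) T t"
      unfolding F_def using \<tau> by (intro mult_right_mono) (auto simp: indicator_def)
  qed
  show ?thesis using m1 add_left_mono[OF m2, of "L2Linf \<tau> (\<lambda>t. LP \<phi> M (b t))"] by (rule order_trans)
qed

lemma Snorm_tri:
  assumes K: "\<And>k. Kok (LP_kernel \<phi> (2 ^ k))" and a: "PS T a" and b: "PS T b" and \<tau>: "\<tau> \<le> T"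
  shows "Snorm \<phi> c \<tau> a \<le> Snorm \<phi> c \<tau> b + Snorm \<phi> c T (\<lambda>t y. a t y - b t y)"
  unfolding Snorm_def by (rule sum_tri[where c="\<lambda>k. c (2 ^ k)"]) (rule L2Linf_tri[OF K a b \<tau>])

lemma Snorm_neg: "Snorm \<phi> c \<tau> (\<lambda>t y. - u t y) = Snorm \<phi> c \<tau> u"
proof -
  have e1: "(\<lambda>t. LP \<phi> M (\<lambda>y. - u t y)) = (\<lambda>t x. - LP \<phi> M (u t) x)" for M by (simp add: LP_neg)
  have e2: "L2Linf \<tau> (\<lambda>t x. - w t x) = L2Linf \<tau> w" for w
    unfolding L2Linf_SQ by (simp only: Linfx_neg)
  show ?thesis unfolding Snorm_def by (simp only: e1 e2)
qed

lemma Snorm_mono: "mono (\<lambda>\<tau>. Snorm \<phi> c \<tau> u)"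
proof (rule monoI)
  fix \<tau> \<tau>' :: real assume le: "\<tau> \<le> \<tau>'"
  have "L2Linf \<tau> w \<le> L2Linf \<tau>' w" for w
    unfolding L2Linf_SQ
  proof (intro SQ_mono nn_integral_mono power_mono_ennreal)
    fix t
    show "indicator {0..\<tau>} t * Linfx (w t) \<le> indicator {0..\<tau>'} t * Linfx (w t)"
      using le by (intro mult_right_mono) (auto simp: indicator_def)
  qed
  then show "Snorm \<phi> c \<tau> u \<le> Snorm \<phi> c \<tau>' u"
    unfolding Snorm_def by (intro suminf_le mult_left_mono) (auto simp: summableI)
qed

lemma PS_zero: "PS T (\<lambda>t y. 0)"
proof -
  have "Linfx (\<lambda>y. 0) < \<infinity>" using Linfx_fin_iff[of "\<lambda>y. 0"] by auto
  then show ?thesis unfolding PS_def by auto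
qed

lemma PS_lin:
  assumes a: "PS T a" and b: "PS T b"
  shows "PS T (\<lambda>t y. c * a t y + b t y)"
proof -
  let ?RT = "restrict_space lborel {0..T}"
  have am: "(\<lambda>(t, y). a t y) \<in> borel_measurable (?RT \<Otimes>\<^sub>M lborel)" and bm: "(\<lambda>(t, y). b t y) \<in> borel_measurable (?RT \<Otimes>\<^sub>M lborel)"
    using a b unfolding PS_def by auto
  have m: "(\<lambda>(t, y). c * a t y + b t y) \<in> borel_measurable (?RT \<Otimes>\<^sub>M lborel)"
  proof -
    have [measurable]: "(\<lambda>p. a (fst p) (snd p)) \<in> borel_measurable (?RT \<Otimes>\<^sub>M lborel)"
      "(\<lambda>p. b (fst p) (snd p)) \<in> borel_measurable (?RT \<Otimes>\<^sub>M lborel)"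
      using am bm by (simp_all add: case_prod_beta')
    show ?thesis unfolding case_prod_beta' by measurable
  qed
  have "AE t in lborel. (t \<in> {0..T} \<longrightarrow> Linfx (a t) < \<infinity>) \<and> (t \<in> {0..T} \<longrightarrow> Linfx (b t) < \<infinity>)"
    using a b unfolding PS_def by auto
  then have "AE t in lborel. t \<in> {0..T} \<longrightarrow> Linfx (\<lambda>y. c * a t y + b t y) < \<infinity>"
  proof (rule eventually_mono)
    fix t assume h: "(t \<in> {0..T} \<longrightarrow> Linfx (a t) < \<infinity>) \<and> (t \<in> {0..T} \<longrightarrow> Linfx (b t) < \<infinity>)"
    show "t \<in> {0..T} \<longrightarrow> Linfx (\<lambda>y. c * a t y + b t y) < \<infinity>"
    proof
      assume tT: "t \<in> {0..T}"
      have atm: "a t \<in> borel_measurable lborel" by (rule sec_meas[OF am tT])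
      have btm: "b t \<in> borel_measurable lborel" by (rule sec_meas[OF bm tT])
      obtain Ba where Ba: "AE x in lborel. cmod (a t x) \<le> Ba" using h tT Linfx_fin_iff[OF atm] by blast
      obtain Bb where Bb: "AE x in lborel. cmod (b t x) \<le> Bb" using h tT Linfx_fin_iff[OF btm] by blast
      have "AE x in lborel. cmod (c * a t x + b t x) \<le> cmod c * Ba + Bb"
        using Ba Bb
      proof (eventually_elim)
        case (elim x)
        have "cmod (c * a t x + b t x) \<le> cmod c * cmod (a t x) + cmod (b t x)"
          using norm_triangle_ineq[of "c * a t x" "b t x"] by (simp add: norm_mult)
        also have "\<dots> \<le> cmod c * Ba + Bb" using elim by (intro add_mono mult_left_mono) auto
        finally show ?case .
      qed
      moreover have "(\<lambda>y. c * a t y + b t y) \<in> borel_measurable lborel" using atm btm by measurable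
      ultimately show "Linfx (\<lambda>y. c * a t y + b t y) < \<infinity>" using Linfx_fin_iff by blast
    qed
  qed
  then show ?thesis unfolding PS_def using m by auto
qed

lemma Sspace_PS:
  assumes "Sspace \<phi> c T u"
  shows "PS T u"
proof -
  let ?RT = "restrict_space lborel {0..T}"
  have um: "(\<lambda>(t, y). u t y) \<in> borel_measurable (?RT \<Otimes>\<^sub>M lborel)" and fin: "L2Linf T u < \<infinity>"
    using assms unfolding Sspace_def L2tLinfx_space_def by auto
  have lm: "(\<lambda>t. Linfx (u t)) \<in> borel_measurable ?RT" by (rule Linfx_meas[OF um])
  have m: "(\<lambda>t. indicator {0..T} t * Linfx (u t)) \<in> borel_measurable lborel" by (rule ind_meas[OF lm order_refl])
  have "(\<integral>\<^sup>+ t. (indicator {0..T} t * Linfx (u t)) ^ 2 \<partial>lborel) \<noteq> \<infinity>"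
  proof
    assume "(\<integral>\<^sup>+ t. (indicator {0..T} t * Linfx (u t)) ^ 2 \<partial>lborel) = \<infinity>"
    then have "L2Linf T u = \<infinity>" unfolding L2Linf_SQ by (simp add: SQ_def)
    then show False using fin by simp
  qed
  then have "AE t in lborel. (indicator {0..T} t * Linfx (u t)) ^ 2 \<noteq> \<infinity>"
    by (intro nn_integral_PInf_AE) (use m in measurable)
  then have "AE t in lborel. t \<in> {0..T} \<longrightarrow> Linfx (u t) < \<infinity>"
  proof (rule eventually_mono)
    fix t assume h: "(indicator {0..T} t * Linfx (u t)) ^ 2 \<noteq> \<infinity>"
    show "t \<in> {0..T} \<longrightarrow> Linfx (u t) < \<infinity>"
    proof
      assume "t \<in> {0..T}"
      then have h2: "Linfx (u t) ^ 2 \<noteq> \<infinity>" using h by simp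
      show "Linfx (u t) < \<infinity>"
      proof (rule ccontr)
        assume "\<not> Linfx (u t) < \<infinity>"
        then have "Linfx (u t) = \<infinity>" by (metis infinity_ennreal_def top.not_eq_extremum)
        then show False using h2 by (simp add: power2_eq_square)
      qed
    qed
  qed
  then show ?thesis unfolding PS_def using um by auto
qed

lemma caseX:
  assumes Kok: "\<And>k. Kok (LP_kernel \<phi> (2 ^ k))" and sp: "space G = space M"
  shows "\<forall>v :: 'w \<Rightarrow> fn. (\<forall>\<omega>\<in>space M. Xspace \<phi> c T (v \<omega>)) \<and>
        strongly_meas G (Xspace \<phi> c T) (Xnorm \<phi> c T) v \<longrightarrow>
        (\<lambda>(\<omega>, \<tau>). enn2real (Xnorm \<phi> c \<tau> (v \<omega>)))
          \<in> borel_measurable (G \<Otimes>\<^sub>M restrict_space borel {0..T})"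
proof (intro allI impI, elim conjE)
  fix v :: "'w \<Rightarrow> fn"
  assume vin: "\<forall>\<omega>\<in>space M. Xspace \<phi> c T (v \<omega>)" and sm: "strongly_meas G (Xspace \<phi> c T) (Xnorm \<phi> c T) v"
  show "(\<lambda>(\<omega>, \<tau>). enn2real (Xnorm \<phi> c \<tau> (v \<omega>))) \<in> borel_measurable (G \<Otimes>\<^sub>M restrict_space borel {0..T})"
  proof (rule abstract_main[where Nrm="\<lambda>\<tau> u. Xnorm \<phi> c \<tau> u" and P="PX T" and inE="Xspace \<phi> c T"])
    show "\<And>u. mono (\<lambda>\<tau>. Xnorm \<phi> c \<tau> u)" by (rule Xnorm_mono)
    show "\<And>a b \<tau>. PX T a \<Longrightarrow> PX T b \<Longrightarrow> \<tau> \<le> T \<Longrightarrow> Xnorm \<phi> c \<tau> a \<le> Xnorm \<phi> c \<tau> b + Xnorm \<phi> c T (\<lambda>t y. a t y - b t y)"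
      by (rule Xnorm_tri[OF Kok])
    show "\<And>u \<tau>. Xnorm \<phi> c \<tau> (\<lambda>t y. - u t y) = Xnorm \<phi> c \<tau> u" by (rule Xnorm_neg)
    show "PX T (\<lambda>t y. 0)" by (rule PX_zero)
    show "\<And>a b c. PX T a \<Longrightarrow> PX T b \<Longrightarrow> PX T (\<lambda>t y. c * a t y + b t y)" by (rule PX_lin)
    show "\<And>u. Xspace \<phi> c T u \<Longrightarrow> PX T u" by (simp add: Xspace_def CL2_def PX_def)
    show "\<forall>\<omega>\<in>space G. Xspace \<phi> c T (v \<omega>)" using vin sp by simp
    show "\<forall>\<omega>\<in>space G. Xnorm \<phi> c T (v \<omega>) < \<infinity>" using vin sp by (simp add: Xspace_def)
    show "strongly_meas G (Xspace \<phi> c T) (Xnorm \<phi> c T) v" by (rule sm)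
  qed
qed

lemma caseS:
  assumes Kok: "\<And>k. Kok (LP_kernel \<phi> (2 ^ k))" and sp: "space G = space M"
  shows "\<forall>v :: 'w \<Rightarrow> fn. (\<forall>\<omega>\<in>space M. Sspace \<phi> c T (v \<omega>)) \<and>
        strongly_meas G (Sspace \<phi> c T) (Snorm \<phi> c T) v \<longrightarrow>
        (\<lambda>(\<omega>, \<tau>). enn2real (Snorm \<phi> c \<tau> (v \<omega>)))
          \<in> borel_measurable (G \<Otimes>\<^sub>M restrict_space borel {0..T})"
proof (intro allI impI, elim conjE)
  fix v :: "'w \<Rightarrow> fn"
  assume vin: "\<forall>\<omega>\<in>space M. Sspace \<phi> c T (v \<omega>)" and sm: "strongly_meas G (Sspace \<phi> c T) (Snorm \<phi> c T) v"
  show "(\<lambda>(\<omega>, \<tau>). enn2real (Snorm \<phi> c \<tau> (v \<omega>))) \<in> borel_measurable (G \<Otimes>\<^sub>M restrict_space borel {0..T})"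
  proof (rule abstract_main[where Nrm="\<lambda>\<tau> u. Snorm \<phi> c \<tau> u" and P="PS T" and inE="Sspace \<phi> c T"])
    show "\<And>u. mono (\<lambda>\<tau>. Snorm \<phi> c \<tau> u)" by (rule Snorm_mono)
    show "\<And>a b \<tau>. PS T a \<Longrightarrow> PS T b \<Longrightarrow> \<tau> \<le> T \<Longrightarrow> Snorm \<phi> c \<tau> a \<le> Snorm \<phi> c \<tau> b + Snorm \<phi> c T (\<lambda>t y. a t y - b t y)"
      by (rule Snorm_tri[OF Kok])
    show "\<And>u \<tau>. Snorm \<phi> c \<tau> (\<lambda>t y. - u t y) = Snorm \<phi> c \<tau> u" by (rule Snorm_neg)
    show "PS T (\<lambda>t y. 0)" by (rule PS_zero)
    show "\<And>a b c. PS T a \<Longrightarrow> PS T b \<Longrightarrow> PS T (\<lambda>t y. c * a t y + b t y)" by (rule PS_lin)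
    show "\<And>u. Sspace \<phi> c T u \<Longrightarrow> PS T u" by (rule Sspace_PS)
    show "\<forall>\<omega>\<in>space G. Sspace \<phi> c T (v \<omega>)" using vin sp by simp
    show "\<forall>\<omega>\<in>space G. Snorm \<phi> c T (v \<omega>) < \<infinity>" using vin sp by (simp add: Sspace_def)
    show "strongly_meas G (Sspace \<phi> c T) (Snorm \<phi> c T) v" by (rule sm)
  qed
qed

theorem lemmaA4:
  fixes M G :: "'w measure" and \<phi> :: "real^3 \<Rightarrow> real" and n :: nat and D T :: real
  assumes "prob_space M" and "subalgebra M G"
    and "smooth3 \<phi>"
    and "\<forall>\<xi>. norm \<xi> < 1 \<longrightarrow> \<phi> \<xi> = 1"
    and "\<forall>\<xi>. norm \<xi> \<ge> 2 \<longrightarrow> \<phi> \<xi> = 0"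
    and "D > 0" and "T > 0"
  defines "N \<equiv> (2::real) ^ n"
  shows
   "(\<forall>v :: 'w \<Rightarrow> fn. (\<forall>\<omega>\<in>space M. Xspace \<phi> (cND N D) T (v \<omega>)) \<and>
        strongly_meas G (Xspace \<phi> (cND N D) T) (Xnorm \<phi> (cND N D) T) v \<longrightarrow>
        (\<lambda>(\<omega>, \<tau>). enn2real (Xnorm \<phi> (cND N D) \<tau> (v \<omega>)))
          \<in> borel_measurable (G \<Otimes>\<^sub>M restrict_space borel {0..T}))
  \<and> (\<forall>v :: 'w \<Rightarrow> fn. (\<forall>\<omega>\<in>space M. Xspace \<phi> (cleND N D) T (v \<omega>)) \<and>
        strongly_meas G (Xspace \<phi> (cleND N D) T) (Xnorm \<phi> (cleND N D) T) v \<longrightarrow>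
        (\<lambda>(\<omega>, \<tau>). enn2real (Xnorm \<phi> (cleND N D) \<tau> (v \<omega>)))
          \<in> borel_measurable (G \<Otimes>\<^sub>M restrict_space borel {0..T}))
  \<and> (\<forall>v :: 'w \<Rightarrow> fn. (\<forall>\<omega>\<in>space M. Sspace \<phi> (cND N D) T (v \<omega>)) \<and>
        strongly_meas G (Sspace \<phi> (cND N D) T) (Snorm \<phi> (cND N D) T) v \<longrightarrow>
        (\<lambda>(\<omega>, \<tau>). enn2real (Snorm \<phi> (cND N D) \<tau> (v \<omega>)))
          \<in> borel_measurable (G \<Otimes>\<^sub>M restrict_space borel {0..T}))
  \<and> (\<forall>v :: 'w \<Rightarrow> fn. (\<forall>\<omega>\<in>space M. Sspace \<phi> (cleND N D) T (v \<omega>)) \<and>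
        strongly_meas G (Sspace \<phi> (cleND N D) T) (Snorm \<phi> (cleND N D) T) v \<longrightarrow>
        (\<lambda>(\<omega>, \<tau>). enn2real (Snorm \<phi> (cleND N D) \<tau> (v \<omega>)))
          \<in> borel_measurable (G \<Otimes>\<^sub>M restrict_space borel {0..T}))"
proof -
  have Kok: "Kok (LP_kernel \<phi> (2 ^ k))" for k
    unfolding Kok_def using LPK_props[OF assms(3) assms(5), of "2 ^ k"] by auto
  have sp: "space G = space M" using assms(2) unfolding subalgebra_def by auto
  show ?thesis
    using caseX[OF Kok sp, of "cND N D" T] caseX[OF Kok sp, of "cleND N D" T]
      caseS[OF Kok sp, of "cND N D" T] caseS[OF Kok sp, of "cleND N D" T]
    by blast
qed

end
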